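(* Let $B_{\mathrm{unl}}(x,y)=\sum_{i,j\ge0}b_{i,j}x^iy^j$, where $b_{i,j}$ is the number of isomorphism classes of bicoloured graphs with $i$ vertices in the first colour class and $j$ in the second, and let $T_{\mathrm{unl}}(x,y)=\sum_{i,j\ge0}\tau_{i,j}x^iy^j$, where $\tau_{i,j}$ is the number of isomorphism classes of tangles with $i$ vertices in the first colour class and $j$ in the second. Then \[T_{\mathrm{unl}}(x,y)=1-x-y-B_{\mathrm{unl}}(x,y)^{-1}.\]
   Context: A bicoloured graph is a triple $G=(V_1,V_2,E)$ with $V_1,V_2$ disjoint finite sets (ordered colour classes) and $E\subseteq V_1\times V_2$; isomorphisms are graph isomorphisms mapping $V_1$ to $V_1$ and $V_2$ to $V_2$. For a vertex $u$ let $N(u)$ be its set of neighbours. $G$ is called a tangle if $|V_1|\ge2$, $|V_2|\ge2$, the graph on $V_2$ joining $a,b$ whenever neither of $N(a),N(b)$ contains the other is connected, and the graph on $V_1$ defined by the same rule is connected. (Equivalently, viewing $G$ as the poset on $V_1\cup V_2$ with $u<w$ iff $u\in V_1,w\in V_2$, $(u,w)\in E$, the whole poset is a single tangle, i.e. a component of $(2+2)$-connectedness with top $V_2$ and bottom $V_1$.) *)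

theory Defs
  imports "HOL-Computational_Algebra.Formal_Power_Series"
begin

text \<open>A bicoloured graph with i vertices in the first colour class and j in the second
  is represented (up to isomorphism) by an edge set E \<subseteq> {..<i} \<times> {..<j},
  with V1 = {..<i} and V2 = {..<j}.\<close>

definition bigraphs :: "nat \<Rightarrow> nat \<Rightarrow> (nat \<times> nat) set set" where
  "bigraphs i j = {E. E \<subseteq> {..<i} \<times> {..<j}}"

definition bigraph_iso :: "nat \<Rightarrow> nat \<Rightarrow> ((nat \<times> nat) set \<times> (nat \<times> nat) set) set" where
  "bigraph_iso i j = {(E, E'). E \<in> bigraphs i j \<and> E' \<in> bigraphs i j \<and>
      (\<exists>f g. bij_betw f {..<i} {..<i} \<and> bij_betw g {..<j} {..<j} \<and>
             E' = (\<lambda>(u, w). (f u, g w)) ` E)}"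

definition nbhd2 :: "(nat \<times> nat) set \<Rightarrow> nat \<Rightarrow> nat set" where
  "nbhd2 E a = {u. (u, a) \<in> E}"

definition nbhd1 :: "(nat \<times> nat) set \<Rightarrow> nat \<Rightarrow> nat set" where
  "nbhd1 E u = {w. (u, w) \<in> E}"

definition incomp_graph :: "nat set \<Rightarrow> (nat \<Rightarrow> nat set) \<Rightarrow> (nat \<times> nat) set" where
  "incomp_graph V N = {(a, b). a \<in> V \<and> b \<in> V \<and> \<not> N a \<subseteq> N b \<and> \<not> N b \<subseteq> N a}"

definition connected_on :: "nat set \<Rightarrow> (nat \<times> nat) set \<Rightarrow> bool" where
  "connected_on V R \<longleftrightarrow> (\<forall>a\<in>V. \<forall>b\<in>V. (a, b) \<in> R\<^sup>*)"

definition is_tangle :: "nat \<Rightarrow> nat \<Rightarrow> (nat \<times> nat) set \<Rightarrow> bool" where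
  "is_tangle i j E \<longleftrightarrow> E \<in> bigraphs i j \<and> i \<ge> 2 \<and> j \<ge> 2 \<and>
     connected_on {..<j} (incomp_graph {..<j} (nbhd2 E)) \<and>
     connected_on {..<i} (incomp_graph {..<i} (nbhd1 E))"

definition bcount :: "nat \<Rightarrow> nat \<Rightarrow> nat" where
  "bcount i j = card (bigraphs i j // bigraph_iso i j)"

definition tcount :: "nat \<Rightarrow> nat \<Rightarrow> nat" where
  "tcount i j = card ({E. is_tangle i j E} // bigraph_iso i j)"

text \<open>Bivariate formal power series over Q as power series in x whose coefficients are
  power series in y: the coefficient of x^i y^j of F is F $ i $ j.\<close>
definition bivar_gf :: "(nat \<Rightarrow> nat \<Rightarrow> nat) \<Rightarrow> rat fps fps" where
  "bivar_gf c = Abs_fps (\<lambda>i. Abs_fps (\<lambda>j. of_nat (c i j)))"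

abbreviation X_var :: "rat fps fps" where "X_var \<equiv> fps_X"
abbreviation Y_var :: "rat fps fps" where "Y_var \<equiv> fps_const fps_X"

end

theory Submission
  imports Defs
begin


section \<open>Isomorphisms, pointwise\<close>

definition isoby :: "nat \<Rightarrow> nat \<Rightarrow> (nat \<Rightarrow> nat) \<Rightarrow> (nat \<Rightarrow> nat) \<Rightarrow> (nat \<times> nat) set \<Rightarrow> (nat \<times> nat) set \<Rightarrow> bool" where
  "isoby i j f g E E' \<longleftrightarrow> inj_on f {..<i} \<and> f ` {..<i} \<subseteq> {..<i} \<and> inj_on g {..<j} \<and> g ` {..<j} \<subseteq> {..<j}
     \<and> E \<in> bigraphs i j \<and> E' \<in> bigraphs i j \<and> (\<forall>u<i. \<forall>w<j. (f u, g w) \<in> E' \<longleftrightarrow> (u, w) \<in> E)"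

lemma endo_surj: fixes f :: "nat \<Rightarrow> nat" and n :: nat assumes "inj_on f {..<n}" "f ` {..<n} \<subseteq> {..<n}" shows "f ` {..<n} = {..<n}"
  by (rule endo_inj_surj[OF finite_lessThan assms(2) assms(1)])

lemma endo_bij: "inj_on (f::nat\<Rightarrow>nat) {..<(n::nat)} \<Longrightarrow> f ` {..<n} \<subseteq> {..<n} \<Longrightarrow> bij_betw f {..<n} {..<n}"
  using endo_surj by (auto simp: bij_betw_def)


lemma bigraphs_mem: "E \<in> bigraphs i j \<longleftrightarrow> (\<forall>u w. (u,w) \<in> E \<longrightarrow> u < i \<and> w < j)"
  unfolding bigraphs_def by auto

lemma iso_iff: "(E, E') \<in> bigraph_iso i j \<longleftrightarrow> (\<exists>f g. isoby i j f g E E')"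
proof
  assume "(E, E') \<in> bigraph_iso i j"
  then obtain f g where E: "E \<in> bigraphs i j" "E' \<in> bigraphs i j" and f: "bij_betw f {..<i} {..<i}"
    and g: "bij_betw g {..<j} {..<j}" and e: "E' = (\<lambda>(u, w). (f u, g w)) ` E"
    unfolding bigraph_iso_def by auto
  have "\<forall>u<i. \<forall>w<j. (f u, g w) \<in> E' \<longleftrightarrow> (u, w) \<in> E"
  proof (intro allI impI)
    fix u w assume u: "u < i" and w: "w < j"
    show "(f u, g w) \<in> E' \<longleftrightarrow> (u, w) \<in> E"
    proof
      assume "(f u, g w) \<in> E'"
      then obtain u' w' where uw: "(u',w') \<in> E" "f u' = f u" "g w' = g w" using e by auto
      then have "u' < i" "w' < j" using E(1) bigraphs_mem by blast+
      then have "u' = u" "w' = w" using uw u w f g unfolding bij_betw_def inj_on_def by auto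
      then show "(u,w) \<in> E" using uw by simp
    qed (use e in auto)
  qed
  moreover have "inj_on f {..<i}" "f ` {..<i} \<subseteq> {..<i}" "inj_on g {..<j}" "g ` {..<j} \<subseteq> {..<j}"
    using f g unfolding bij_betw_def by auto
  ultimately have "isoby i j f g E E'" using E unfolding isoby_def by blast
  then show "\<exists>f g. isoby i j f g E E'" by blast
next
  assume "\<exists>f g. isoby i j f g E E'"
  then obtain f g where I: "isoby i j f g E E'" by auto
  then have f: "bij_betw f {..<i} {..<i}" and g: "bij_betw g {..<j} {..<j}"
    unfolding isoby_def using endo_bij by auto
  have E: "E \<in> bigraphs i j" "E' \<in> bigraphs i j" using I unfolding isoby_def by auto
  have "E' = (\<lambda>(u, w). (f u, g w)) ` E"
  proof (intro set_eqI iffI)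
    fix x assume x: "x \<in> E'"
    obtain a b where ab: "x = (a,b)" by force
    have "a < i" "b < j" using x ab E(2) bigraphs_mem by blast+
    then obtain u w where "u < i" "w < j" "a = f u" "b = g w"
      using f g unfolding bij_betw_def by (metis imageE lessThan_iff)
    then show "x \<in> (\<lambda>(u, w). (f u, g w)) ` E" using I x ab unfolding isoby_def by force
  next
    fix x assume "x \<in> (\<lambda>(u, w). (f u, g w)) ` E"
    then obtain u w where "(u,w) \<in> E" "x = (f u, g w)" by auto
    moreover then have "u < i" "w < j" using E(1) bigraphs_mem by blast+
    ultimately show "x \<in> E'" using I unfolding isoby_def by auto
  qed
  then show "(E, E') \<in> bigraph_iso i j" using f g E unfolding bigraph_iso_def by auto
qed

lemma isoby_refl: "E \<in> bigraphs i j \<Longrightarrow> isoby i j id id E E"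
  unfolding isoby_def by auto

lemma isoby_sym:
  assumes "isoby i j f g E E'"
  shows "isoby i j (inv_into {..<i} f) (inv_into {..<j} g) E' E"
proof -
  have f: "bij_betw f {..<i} {..<i}" and g: "bij_betw g {..<j} {..<j}"
    using assms unfolding isoby_def using endo_bij by auto
  have f': "bij_betw (inv_into {..<i} f) {..<i} {..<i}" and g': "bij_betw (inv_into {..<j} g) {..<j} {..<j}"
    using bij_betw_inv_into[OF f] bij_betw_inv_into[OF g] by auto
  show ?thesis unfolding isoby_def
  proof (intro conjI allI impI)
    fix u w assume u: "u < i" and w: "w < j"
    have "f (inv_into {..<i} f u) = u" using f u by (simp add: bij_betw_inv_into_right)
    moreover have "g (inv_into {..<j} g w) = w" using g w by (simp add: bij_betw_inv_into_right)
    moreover have "inv_into {..<i} f u < i" "inv_into {..<j} g w < j" using f' g' u w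
      unfolding bij_betw_def by auto
    ultimately show "(inv_into {..<i} f u, inv_into {..<j} g w) \<in> E \<longleftrightarrow> (u, w) \<in> E'"
      using assms unfolding isoby_def by metis
  qed (use assms f' g' in \<open>auto simp: isoby_def bij_betw_def\<close>)
qed

lemma isoby_trans:
  assumes "isoby i j f g E E'" "isoby i j f' g' E' E''"
  shows "isoby i j (f' \<circ> f) (g' \<circ> g) E E''"
proof -
  have a: "inj_on f {..<i}" "f ` {..<i} \<subseteq> {..<i}" "inj_on g {..<j}" "g ` {..<j} \<subseteq> {..<j}"
    "inj_on f' {..<i}" "f' ` {..<i} \<subseteq> {..<i}" "inj_on g' {..<j}" "g' ` {..<j} \<subseteq> {..<j}"
    "E \<in> bigraphs i j" "E'' \<in> bigraphs i j"
    using assms unfolding isoby_def by auto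
  have "inj_on (f' \<circ> f) {..<i}" using a(1,2,5) by (meson comp_inj_on inj_on_subset)
  moreover have "inj_on (g' \<circ> g) {..<j}" using a(3,4,7) by (meson comp_inj_on inj_on_subset)
  moreover have "(f' \<circ> f) ` {..<i} \<subseteq> {..<i}" using a(2,6) by (auto simp: image_subset_iff)
  moreover have "(g' \<circ> g) ` {..<j} \<subseteq> {..<j}" using a(4,8) by (auto simp: image_subset_iff)
  moreover have "\<forall>u<i. \<forall>w<j. ((f' \<circ> f) u, (g' \<circ> g) w) \<in> E'' \<longleftrightarrow> (u, w) \<in> E"
  proof (intro allI impI)
    fix u w assume "u < i" "w < j"
    moreover then have "f u < i" "g w < j" using a(2,4) by auto
    ultimately show "((f' \<circ> f) u, (g' \<circ> g) w) \<in> E'' \<longleftrightarrow> (u, w) \<in> E"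
      using assms unfolding isoby_def by simp
  qed
  ultimately show ?thesis using a unfolding isoby_def by blast
qed

lemma equiv_iso: "equiv (bigraphs i j) (bigraph_iso i j)"
proof (rule equivI)
  show "bigraph_iso i j \<subseteq> bigraphs i j \<times> bigraphs i j" unfolding bigraph_iso_def by auto
  show "refl_on (bigraphs i j) (bigraph_iso i j)" unfolding refl_on_def iso_iff using isoby_refl by blast
  show "sym (bigraph_iso i j)" unfolding sym_def iso_iff using isoby_sym by blast
  show "trans (bigraph_iso i j)" unfolding trans_def iso_iff using isoby_trans by blast
qed

section \<open>Tops\<close>

definition is_top :: "nat \<Rightarrow> nat \<Rightarrow> (nat \<times> nat) set \<Rightarrow> nat set \<Rightarrow> nat set \<Rightarrow> bool" where
  "is_top i j E A B \<longleftrightarrow> A \<subseteq> {..<i} \<and> B \<subseteq> {..<j} \<and> (\<forall>u\<in>{..<i}-A. \<forall>w\<in>B. (u,w)\<in>E)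
     \<and> (\<forall>u\<in>A. \<forall>w\<in>{..<j}-B. (u,w)\<notin>E)"

definition mintop :: "nat \<Rightarrow> nat \<Rightarrow> (nat \<times> nat) set \<Rightarrow> nat set \<Rightarrow> nat set \<Rightarrow> bool" where
  "mintop i j E A B \<longleftrightarrow> is_top i j E A B \<and> (A \<noteq> {} \<or> B \<noteq> {}) \<and>
     (\<forall>A' B'. is_top i j E A' B' \<and> A' \<subseteq> A \<and> B' \<subseteq> B \<and> (A' \<noteq> {} \<or> B' \<noteq> {}) \<longrightarrow> A' = A \<and> B' = B)"

lemma top_Int: "is_top i j E A B \<Longrightarrow> is_top i j E A' B' \<Longrightarrow> is_top i j E (A \<inter> A') (B \<inter> B')"
  unfolding is_top_def by blast

lemma mintop_single1:
  assumes "is_top i j E A {}" "u \<in> A" shows "is_top i j E {u} {}"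
  using assms unfolding is_top_def by blast

lemma mintop_single2:
  assumes "is_top i j E {} B" "w \<in> B" shows "is_top i j E {} {w}"
  using assms unfolding is_top_def by blast

lemma mintops_distinct:
  assumes m: "mintop i j E A B" and m': "mintop i j E A' B'" and ne: "\<not> (A = A' \<and> B = B')"
  shows "(\<exists>u v. A = {u} \<and> A' = {v} \<and> B = {} \<and> B' = {}) \<or> (\<exists>w w'. B = {w} \<and> B' = {w'} \<and> A = {} \<and> A' = {})"
proof -
  have t: "is_top i j E A B" and t': "is_top i j E A' B'" using m m' unfolding mintop_def by auto
  have "is_top i j E (A \<inter> A') (B \<inter> B')" using top_Int[OF t t'] .
  then have emp: "A \<inter> A' = {} \<and> B \<inter> B' = {}"
    using m m' ne unfolding mintop_def by (metis Int_lower1 Int_lower2)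
  have c1: "\<not> (A \<noteq> {} \<and> B' \<noteq> {})"
  proof
    assume "A \<noteq> {} \<and> B' \<noteq> {}"
    then obtain u w where "u \<in> A" "w \<in> B'" by blast
    then show False using emp t t' unfolding is_top_def by blast
  qed
  have c2: "\<not> (B \<noteq> {} \<and> A' \<noteq> {})"
  proof
    assume "B \<noteq> {} \<and> A' \<noteq> {}"
    then obtain u w where "u \<in> A'" "w \<in> B" by blast
    then show False using emp t t' unfolding is_top_def by blast
  qed
  have ne1: "A \<noteq> {} \<or> B \<noteq> {}" and ne2: "A' \<noteq> {} \<or> B' \<noteq> {}" using m m' unfolding mintop_def by auto
  show ?thesis
  proof (cases "A = {}")
    case False
    then have B': "B' = {}" using c1 by blast
    then have "A' \<noteq> {}" using ne2 by blast
    then have B: "B = {}" using c2 by blast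
    obtain u where u: "u \<in> A" using False by blast
    obtain v where v: "v \<in> A'" using \<open>A' \<noteq> {}\<close> by blast
    have "{u} = A" using m mintop_single1[of i j E A u] u B unfolding mintop_def by blast
    moreover have "{v} = A'" using m' mintop_single1[of i j E A' v] v B' unfolding mintop_def by blast
    ultimately show ?thesis using B B' by blast
  next
    case True
    then have B: "B \<noteq> {}" using ne1 by blast
    then have A': "A' = {}" using c2 by blast
    then have "B' \<noteq> {}" using ne2 by blast
    obtain u where u: "u \<in> B" using B by blast
    obtain v where v: "v \<in> B'" using \<open>B' \<noteq> {}\<close> by blast
    have "{u} = B" using m mintop_single2[of i j E B u] u True unfolding mintop_def by blast
    moreover have "{v} = B'" using m' mintop_single2[of i j E B' v] v A' unfolding mintop_def by blast
    ultimately show ?thesis using True A' by blast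
  qed
qed

lemma mintops_card:
  assumes "mintop i j E A B" "mintop i j E A' B'"
  shows "card A = card A' \<and> card B = card B'"
proof (cases "A = A' \<and> B = B'")
  case False
  from mintops_distinct[OF assms False] show ?thesis by auto
qed simp

lemma mintop_exists:
  assumes "E \<in> bigraphs i j" "(i, j) \<noteq> (0, 0)"
  shows "\<exists>A B. mintop i j E A B"
proof -
  let ?P = "\<lambda>(A, B). is_top i j E A B \<and> (A \<noteq> {} \<or> B \<noteq> {})"
  have "?P ({..<i}, {..<j})" using assms unfolding is_top_def by auto
  from ex_has_least_nat[of ?P "({..<i}, {..<j})" "\<lambda>(A,B). card A + card B", OF this]
  obtain AB where P: "?P AB" and min0: "\<forall>y. ?P y \<longrightarrow> (\<lambda>(A,B). card A + card B) AB \<le> (\<lambda>(A,B). card A + card B) y"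
    by blast
  obtain A B where AB: "AB = (A, B)" by force
  have min: "\<And>A' B'. ?P (A', B') \<Longrightarrow> card A + card B \<le> card A' + card B'"
    using min0 AB by fastforce
  have tA: "is_top i j E A B" "A \<noteq> {} \<or> B \<noteq> {}" using P AB by auto
  have fin: "finite A" "finite B" using tA unfolding is_top_def by (auto intro: finite_subset)
  have "\<forall>A' B'. is_top i j E A' B' \<and> A' \<subseteq> A \<and> B' \<subseteq> B \<and> (A' \<noteq> {} \<or> B' \<noteq> {}) \<longrightarrow> A' = A \<and> B' = B"
  proof (intro allI impI)
    fix A' B' assume h: "is_top i j E A' B' \<and> A' \<subseteq> A \<and> B' \<subseteq> B \<and> (A' \<noteq> {} \<or> B' \<noteq> {})"
    then have le: "card A + card B \<le> card A' + card B'" using min[of A' B'] by auto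
    have "card A' \<le> card A" "card B' \<le> card B" using h fin by (auto intro: card_mono)
    then have "card A' = card A" "card B' = card B" using le by auto
    moreover have "A' \<subseteq> A" "B' \<subseteq> B" using h by auto
    ultimately show "A' = A \<and> B' = B" using fin card_subset_eq by blast
  qed
  then have "mintop i j E A B" unfolding mintop_def using tA by blast
  then show ?thesis by blast
qed

lemma isoby_top:
  assumes I: "isoby i j f g E E'" and A: "A \<subseteq> {..<i}" and B: "B \<subseteq> {..<j}"
  shows "is_top i j E' (f ` A) (g ` B) \<longleftrightarrow> is_top i j E A B"
proof -
  have fi: "inj_on f {..<i}" "f ` {..<i} = {..<i}" and gi: "inj_on g {..<j}" "g ` {..<j} = {..<j}"
    using I endo_surj unfolding isoby_def by auto
  have pw: "\<And>u w. u < i \<Longrightarrow> w < j \<Longrightarrow> (f u, g w) \<in> E' \<longleftrightarrow> (u, w) \<in> E" using I unfolding isoby_def by auto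
  have d1: "{..<i} - f ` A = f ` ({..<i} - A)" using inj_on_image_set_diff[OF fi(1), of "{..<i}" A] fi(2) A by simp
  have d2: "{..<j} - g ` B = g ` ({..<j} - B)" using inj_on_image_set_diff[OF gi(1), of "{..<j}" B] gi(2) B by simp
  have s: "f ` A \<subseteq> {..<i}" "g ` B \<subseteq> {..<j}" using fi(2) gi(2) A B by (metis image_mono)+
  have "(\<forall>u\<in>{..<i} - f ` A. \<forall>w\<in>g ` B. (u, w) \<in> E') \<longleftrightarrow> (\<forall>u\<in>{..<i}-A. \<forall>w\<in>B. (u,w)\<in>E)"
  proof -
    have "(\<forall>u\<in>f ` ({..<i} - A). \<forall>w\<in>g ` B. (u, w) \<in> E') \<longleftrightarrow> (\<forall>u\<in>{..<i} - A. \<forall>w\<in>B. (f u, g w) \<in> E')"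
      by blast
    also have "\<dots> \<longleftrightarrow> (\<forall>u\<in>{..<i}-A. \<forall>w\<in>B. (u,w)\<in>E)"
      using pw B by (meson DiffD1 lessThan_iff subsetD)
    finally show ?thesis unfolding d1 .
  qed
  moreover have "(\<forall>u\<in>f ` A. \<forall>w\<in>{..<j} - g ` B. (u, w) \<notin> E') \<longleftrightarrow> (\<forall>u\<in>A. \<forall>w\<in>{..<j}-B. (u,w)\<notin>E)"
  proof -
    have "(\<forall>u\<in>f ` A. \<forall>w\<in>g ` ({..<j} - B). (u, w) \<notin> E') \<longleftrightarrow> (\<forall>u\<in>A. \<forall>w\<in>{..<j} - B. (f u, g w) \<notin> E')"
      by blast
    also have "\<dots> \<longleftrightarrow> (\<forall>u\<in>A. \<forall>w\<in>{..<j}-B. (u,w)\<notin>E)"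
      using pw A by (meson DiffD1 lessThan_iff subsetD)
    finally show ?thesis unfolding d2 .
  qed
  ultimately show ?thesis unfolding is_top_def using s A B by blast
qed

lemma isoby_mintop:
  assumes I: "isoby i j f g E E'" and m: "mintop i j E A B"
  shows "mintop i j E' (f ` A) (g ` B)"
proof -
  have A: "A \<subseteq> {..<i}" and B: "B \<subseteq> {..<j}" using m unfolding mintop_def is_top_def by auto
  have fi: "inj_on f {..<i}" "f ` {..<i} = {..<i}" and gi: "inj_on g {..<j}" "g ` {..<j} = {..<j}"
    using I endo_surj unfolding isoby_def by auto
  have t: "is_top i j E' (f ` A) (g ` B)" using isoby_top[OF I A B] m unfolding mintop_def by auto
  have ne: "f ` A \<noteq> {} \<or> g ` B \<noteq> {}" using m unfolding mintop_def by auto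
  have "A'' = f ` A \<and> B'' = g ` B" if h: "is_top i j E' A'' B''" "A'' \<subseteq> f ` A" "B'' \<subseteq> g ` B" "A'' \<noteq> {} \<or> B'' \<noteq> {}" for A'' B''
  proof -
    define A0 where "A0 = {u\<in>{..<i}. f u \<in> A''}"
    define B0 where "B0 = {w\<in>{..<j}. g w \<in> B''}"
    have eA: "f ` A0 = A''" unfolding A0_def using h(2) A by auto
    have eB: "g ` B0 = B''" unfolding B0_def using h(3) B by auto
    have sA: "A0 \<subseteq> A" unfolding A0_def using h(2) A fi(1) by (auto simp: inj_on_def subset_iff) 
    have sB: "B0 \<subseteq> B" unfolding B0_def using h(3) B gi(1) by (auto simp: inj_on_def subset_iff)
    have "is_top i j E A0 B0" using isoby_top[OF I, of A0 B0] h(1) eA eB A B sA sB by auto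
    moreover have "A0 \<noteq> {} \<or> B0 \<noteq> {}" using h(4) eA eB by auto
    ultimately have "A0 = A \<and> B0 = B" using m sA sB unfolding mintop_def by blast
    then show ?thesis using eA eB by auto
  qed
  then show ?thesis unfolding mintop_def using t ne by blast
qed

lemma isoby_mintop_card:
  assumes I: "isoby i j f g E E'" and m: "mintop i j E A B"
  shows "card (f ` A) = card A" "card (g ` B) = card B"
proof -
  have A: "A \<subseteq> {..<i}" and B: "B \<subseteq> {..<j}" using m unfolding mintop_def is_top_def by auto
  show "card (f ` A) = card A" using I A unfolding isoby_def by (meson card_image inj_on_subset)
  show "card (g ` B) = card B" using I B unfolding isoby_def by (meson card_image inj_on_subset)
qed

definition Class :: "nat \<Rightarrow> nat \<Rightarrow> nat \<Rightarrow> nat \<Rightarrow> (nat \<times> nat) set set" where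
  "Class i j k l = {E \<in> bigraphs i j. \<exists>A B. mintop i j E A B \<and> card A = k \<and> card B = l}"

lemma Class_iso:
  assumes "E \<in> Class i j k l" "(E, E') \<in> bigraph_iso i j"
  shows "E' \<in> Class i j k l"
proof -
  obtain f g where I: "isoby i j f g E E'" using assms(2) iso_iff by blast
  obtain A B where m: "mintop i j E A B" "card A = k" "card B = l" using assms(1) unfolding Class_def by auto
  show ?thesis using isoby_mintop[OF I m(1)] isoby_mintop_card[OF I m(1)] m I
    unfolding Class_def isoby_def by auto
qed

lemma Class_unique:
  assumes "E \<in> Class i j k l" "E \<in> Class i j k' l'"
  shows "k = k' \<and> l = l'"
  using assms mintops_card unfolding Class_def by blast

section \<open>Abstract counting\<close>

lemma card_image_kernel:
  assumes "\<And>x y. x \<in> S \<Longrightarrow> y \<in> S \<Longrightarrow> p x = p y \<longleftrightarrow> q x = q y"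
  shows "card (p ` S) = card (q ` S)"
proof -
  define h where "h = (\<lambda>z. p (inv_into S q z))"
  have eq: "p ` S = h ` (q ` S)"
  proof (intro set_eqI iffI)
    fix z assume "z \<in> p ` S"
    then obtain x where x: "x \<in> S" "z = p x" by auto
    have "inv_into S q (q x) \<in> S" "q (inv_into S q (q x)) = q x"
      using x by (auto intro: inv_into_into f_inv_into_f)
    then have "h (q x) = p x" unfolding h_def using assms x by blast
    then show "z \<in> h ` (q ` S)" using x by (metis imageI)
  next
    fix z assume "z \<in> h ` (q ` S)"
    then obtain x where x: "x \<in> S" "z = h (q x)" by auto
    then show "z \<in> p ` S" unfolding h_def by (auto intro: inv_into_into)
  qed
  have "inj_on h (q ` S)"
  proof (rule inj_onI)
    fix a b assume a: "a \<in> q ` S" and b: "b \<in> q ` S" and e: "h a = h b"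
    have ia: "inv_into S q a \<in> S" "q (inv_into S q a) = a" using a by (auto intro: inv_into_into f_inv_into_f)
    have ib: "inv_into S q b \<in> S" "q (inv_into S q b) = b" using b by (auto intro: inv_into_into f_inv_into_f)
    show "a = b" using e assms[OF ia(1) ib(1)] ia ib unfolding h_def by simp
  qed
  then show ?thesis unfolding eq by (simp add: card_image)
qed

lemma card_quot_prod:
  assumes eA: "equiv A RA" and eB: "equiv B RB" and eD: "equiv D RC" and CD: "C \<subseteq> D"
    and fA: "finite A" and fB: "finite B"
    and into: "\<And>a b. a \<in> A \<Longrightarrow> b \<in> B \<Longrightarrow> \<Phi> a b \<in> C"
    and refl: "\<And>a a' b b'. a \<in> A \<Longrightarrow> a' \<in> A \<Longrightarrow> b \<in> B \<Longrightarrow> b' \<in> B \<Longrightarrow>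
       (\<Phi> a b, \<Phi> a' b') \<in> RC \<longleftrightarrow> (a, a') \<in> RA \<and> (b, b') \<in> RB"
    and surj: "\<And>c. c \<in> C \<Longrightarrow> \<exists>a\<in>A. \<exists>b\<in>B. (c, \<Phi> a b) \<in> RC"
  shows "card (C // RC) = card (A // RA) * card (B // RB)"
proof -
  define p where "p = (\<lambda>(a, b). RC `` {\<Phi> a b})"
  define q where "q = (\<lambda>(a, b). (RA `` {a}, RB `` {b}))"
  have k: "p x = p y \<longleftrightarrow> q x = q y" if "x \<in> A \<times> B" "y \<in> A \<times> B" for x y
  proof -
    obtain a b a' b' where xy: "x = (a, b)" "y = (a', b')" by force
    have ab: "a \<in> A" "b \<in> B" "a' \<in> A" "b' \<in> B" using that xy by auto
    have "p x = p y \<longleftrightarrow> (\<Phi> a b, \<Phi> a' b') \<in> RC"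
      using equiv_class_eq_iff[OF eD] into[OF ab(1,2)] into[OF ab(3,4)] CD xy unfolding p_def by auto
    also have "\<dots> \<longleftrightarrow> (a, a') \<in> RA \<and> (b, b') \<in> RB" using refl ab by blast
    also have "\<dots> \<longleftrightarrow> q x = q y"
      using equiv_class_eq_iff[OF eA] equiv_class_eq_iff[OF eB] ab xy unfolding q_def by auto
    finally show ?thesis .
  qed
  have qS: "q ` (A \<times> B) = (A // RA) \<times> (B // RB)"
    unfolding q_def quotient_def by auto
  have pS: "p ` (A \<times> B) = C // RC"
  proof (intro set_eqI iffI)
    fix X assume "X \<in> p ` (A \<times> B)"
    then obtain a b where "a \<in> A" "b \<in> B" "X = RC `` {\<Phi> a b}" unfolding p_def by auto
    then show "X \<in> C // RC" using into by (auto intro: quotientI)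
  next
    fix X assume "X \<in> C // RC"
    then obtain c where c: "c \<in> C" "X = RC `` {c}" by (auto elim: quotientE)
    then obtain a b where ab: "a \<in> A" "b \<in> B" "(c, \<Phi> a b) \<in> RC" using surj by blast
    then have "RC `` {c} = RC `` {\<Phi> a b}" using equiv_class_eq_iff[OF eD] by blast
    then show "X \<in> p ` (A \<times> B)" using c ab unfolding p_def by force
  qed
  have "card (C // RC) = card (q ` (A \<times> B))" using card_image_kernel[of "A \<times> B" p q] k pS by simp
  also have "\<dots> = card (A // RA) * card (B // RB)" unfolding qS
    by (simp add: card_cartesian_product)
  finally show ?thesis .
qed

section \<open>Concatenation\<close>

definition cat :: "nat \<Rightarrow> nat \<Rightarrow> (nat \<times> nat) set \<Rightarrow> nat \<Rightarrow> nat \<Rightarrow> (nat \<times> nat) set \<Rightarrow> (nat \<times> nat) set" where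
  "cat i0 j0 E k l F = {(u, w). u < i0 + k \<and> w < j0 + l \<and>
     (if u < i0 then (w < j0 \<longrightarrow> (u, w) \<in> E) else (j0 \<le> w \<and> (u - i0, w - j0) \<in> F))}"

definition indec :: "nat \<Rightarrow> nat \<Rightarrow> (nat \<times> nat) set \<Rightarrow> bool" where
  "indec k l F \<longleftrightarrow> F \<in> bigraphs k l \<and> mintop k l F {..<k} {..<l}"

lemma cat_in: "cat i0 j0 E k l F \<in> bigraphs (i0 + k) (j0 + l)"
  unfolding cat_def bigraphs_def by auto

lemma cat_lo: "u < i0 \<Longrightarrow> w < j0 \<Longrightarrow> (u, w) \<in> cat i0 j0 E k l F \<longleftrightarrow> (u, w) \<in> E"
  unfolding cat_def by auto

lemma cat_hi: "u < k \<Longrightarrow> w < l \<Longrightarrow> (u + i0, w + j0) \<in> cat i0 j0 E k l F \<longleftrightarrow> (u, w) \<in> F"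
  unfolding cat_def by auto

lemma cat_cross1: "u < i0 \<Longrightarrow> j0 \<le> w \<Longrightarrow> w < j0 + l \<Longrightarrow> (u, w) \<in> cat i0 j0 E k l F"
  unfolding cat_def by auto

lemma cat_cross2: "i0 \<le> u \<Longrightarrow> w < j0 \<Longrightarrow> (u, w) \<notin> cat i0 j0 E k l F"
  unfolding cat_def by auto

lemma cat_top:
  assumes A: "A \<subseteq> {..<k}" and B: "B \<subseteq> {..<l}"
  shows "is_top (i0 + k) (j0 + l) (cat i0 j0 E k l F) ((\<lambda>u. u + i0) ` A) ((\<lambda>w. w + j0) ` B) \<longleftrightarrow> is_top k l F A B"
proof -
  let ?C = "cat i0 j0 E k l F"
  have s: "(\<lambda>u. u + i0) ` A \<subseteq> {..<i0 + k}" "(\<lambda>w. w + j0) ` B \<subseteq> {..<j0 + l}" using A B by auto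
  have c1: "(\<forall>u\<in>{..<i0+k} - (\<lambda>u. u + i0) ` A. \<forall>w\<in>(\<lambda>w. w + j0) ` B. (u,w) \<in> ?C)
      \<longleftrightarrow> (\<forall>u\<in>{..<k}-A. \<forall>w\<in>B. (u,w)\<in>F)"
  proof
    assume H: "\<forall>u\<in>{..<i0+k} - (\<lambda>u. u + i0) ` A. \<forall>w\<in>(\<lambda>w. w + j0) ` B. (u,w) \<in> ?C"
    show "\<forall>u\<in>{..<k}-A. \<forall>w\<in>B. (u,w)\<in>F"
    proof (intro ballI)
      fix u w assume u: "u \<in> {..<k}-A" and w: "w \<in> B"
      have "u + i0 \<in> {..<i0+k} - (\<lambda>u. u + i0) ` A" using u by auto
      then have "(u + i0, w + j0) \<in> ?C" using H w by blast
      then show "(u, w) \<in> F" using cat_hi[of u k w l] u w B by auto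
    qed
  next
    assume H: "\<forall>u\<in>{..<k}-A. \<forall>w\<in>B. (u,w)\<in>F"
    show "\<forall>u\<in>{..<i0+k} - (\<lambda>u. u + i0) ` A. \<forall>w\<in>(\<lambda>w. w + j0) ` B. (u,w) \<in> ?C"
    proof (intro ballI)
      fix u w assume u: "u \<in> {..<i0+k} - (\<lambda>u. u + i0) ` A" and w: "w \<in> (\<lambda>w. w + j0) ` B"
      obtain b where b: "b \<in> B" "w = b + j0" using w by auto
      show "(u, w) \<in> ?C"
      proof (cases "u < i0")
        case True then show ?thesis using cat_cross1 b B by auto
      next
        case False
        then have "u = (u - i0) + i0" by simp
        moreover have "u - i0 \<notin> A"
        proof
          assume "u - i0 \<in> A"
          then have "(u - i0) + i0 \<in> (\<lambda>u. u + i0) ` A" by blast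
          then show False using u False by simp
        qed
        moreover have "u - i0 < k" using u False by auto
        ultimately have "(u - i0, b) \<in> F" using H b by auto
        then show ?thesis using cat_hi[of "u - i0" k b l i0 j0 E F] b B False \<open>u - i0 < k\<close> by auto
      qed
    qed
  qed
  have c2: "(\<forall>u\<in>(\<lambda>u. u + i0) ` A. \<forall>w\<in>{..<j0+l} - (\<lambda>w. w + j0) ` B. (u,w) \<notin> ?C)
      \<longleftrightarrow> (\<forall>u\<in>A. \<forall>w\<in>{..<l}-B. (u,w)\<notin>F)"
  proof
    assume H: "\<forall>u\<in>(\<lambda>u. u + i0) ` A. \<forall>w\<in>{..<j0+l} - (\<lambda>w. w + j0) ` B. (u,w) \<notin> ?C"
    show "\<forall>u\<in>A. \<forall>w\<in>{..<l}-B. (u,w)\<notin>F"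
    proof (intro ballI)
      fix u w assume u: "u \<in> A" and w: "w \<in> {..<l}-B"
      have "w + j0 \<in> {..<j0+l} - (\<lambda>w. w + j0) ` B" using w by auto
      then have "(u + i0, w + j0) \<notin> ?C" using H u by blast
      then show "(u, w) \<notin> F" using cat_hi[of u k w l] u w A by auto
    qed
  next
    assume H: "\<forall>u\<in>A. \<forall>w\<in>{..<l}-B. (u,w)\<notin>F"
    show "\<forall>u\<in>(\<lambda>u. u + i0) ` A. \<forall>w\<in>{..<j0+l} - (\<lambda>w. w + j0) ` B. (u,w) \<notin> ?C"
    proof (intro ballI)
      fix u w assume u: "u \<in> (\<lambda>u. u + i0) ` A" and w: "w \<in> {..<j0+l} - (\<lambda>w. w + j0) ` B"
      obtain a where a: "a \<in> A" "u = a + i0" using u by auto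
      show "(u, w) \<notin> ?C"
      proof (cases "w < j0")
        case True then show ?thesis using cat_cross2 a by auto
      next
        case False
        then have "w = (w - j0) + j0" by simp
        moreover have "w - j0 \<notin> B"
        proof
          assume "w - j0 \<in> B"
          then have "(w - j0) + j0 \<in> (\<lambda>w. w + j0) ` B" by blast
          then show False using w False by simp
        qed
        moreover have "w - j0 < l" using w False by auto
        ultimately have "(a, w - j0) \<notin> F" using H a by auto
        then show ?thesis using cat_hi[of a k "w - j0" l i0 j0 E F] a A False \<open>w - j0 < l\<close> by auto
      qed
    qed
  qed
  show ?thesis unfolding is_top_def using s c1 c2 A B by blast
qed

lemma shift_lessThan: "(\<lambda>u. u + i0) ` {..<k} = {i0..<i0 + (k::nat)}"
proof -
  have e: "(\<lambda>u. u + i0) = (+) i0" by (auto simp: add.commute)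
  have "(+) i0 ` {0..<k} = {i0..<i0 + k}" by (simp add: image_add_atLeastLessThan add.commute)
  then show ?thesis unfolding e by (simp add: lessThan_atLeast0)
qed

lemma cat_mintop_iff:
  "mintop (i0 + k) (j0 + l) (cat i0 j0 E k l F) {i0..<i0 + k} {j0..<j0 + l} \<longleftrightarrow> mintop k l F {..<k} {..<l}"
proof -
  let ?C = "cat i0 j0 E k l F"
  let ?s = "\<lambda>u::nat. u + i0" and ?t = "\<lambda>w::nat. w + j0"
  have R: "{i0..<i0 + k} = ?s ` {..<k}" "{j0..<j0 + l} = ?t ` {..<l}" using shift_lessThan by auto
  have sub: "(\<forall>A' B'. is_top (i0+k) (j0+l) ?C A' B' \<and> A' \<subseteq> ?s ` {..<k} \<and> B' \<subseteq> ?t ` {..<l} \<and> (A' \<noteq> {} \<or> B' \<noteq> {}) \<longrightarrow> A' = ?s ` {..<k} \<and> B' = ?t ` {..<l})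
     \<longleftrightarrow> (\<forall>A' B'. is_top k l F A' B' \<and> A' \<subseteq> {..<k} \<and> B' \<subseteq> {..<l} \<and> (A' \<noteq> {} \<or> B' \<noteq> {}) \<longrightarrow> A' = {..<k} \<and> B' = {..<l})"
  proof
    assume H: "\<forall>A' B'. is_top (i0+k) (j0+l) ?C A' B' \<and> A' \<subseteq> ?s ` {..<k} \<and> B' \<subseteq> ?t ` {..<l} \<and> (A' \<noteq> {} \<or> B' \<noteq> {}) \<longrightarrow> A' = ?s ` {..<k} \<and> B' = ?t ` {..<l}"
    show "\<forall>A' B'. is_top k l F A' B' \<and> A' \<subseteq> {..<k} \<and> B' \<subseteq> {..<l} \<and> (A' \<noteq> {} \<or> B' \<noteq> {}) \<longrightarrow> A' = {..<k} \<and> B' = {..<l}"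
    proof (intro allI impI)
      fix A' B' assume h: "is_top k l F A' B' \<and> A' \<subseteq> {..<k} \<and> B' \<subseteq> {..<l} \<and> (A' \<noteq> {} \<or> B' \<noteq> {})"
      then have "is_top (i0+k) (j0+l) ?C (?s ` A') (?t ` B')" using cat_top[of A' k B' l i0 j0 E F] by simp
      moreover have "?s ` A' \<subseteq> ?s ` {..<k}" "?t ` B' \<subseteq> ?t ` {..<l}" using h by (simp_all add: image_mono)
      moreover have "?s ` A' \<noteq> {} \<or> ?t ` B' \<noteq> {}" using h by simp
      ultimately have "?s ` A' = ?s ` {..<k} \<and> ?t ` B' = ?t ` {..<l}" using spec[OF spec[OF H, of "?s ` A'"], of "?t ` B'"] by blast
      moreover have "inj ?s" "inj ?t" by (auto simp: inj_on_def)
      ultimately show "A' = {..<k} \<and> B' = {..<l}" by (simp add: inj_image_eq_iff)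
    qed
  next
    assume H: "\<forall>A' B'. is_top k l F A' B' \<and> A' \<subseteq> {..<k} \<and> B' \<subseteq> {..<l} \<and> (A' \<noteq> {} \<or> B' \<noteq> {}) \<longrightarrow> A' = {..<k} \<and> B' = {..<l}"
    show "\<forall>A' B'. is_top (i0+k) (j0+l) ?C A' B' \<and> A' \<subseteq> ?s ` {..<k} \<and> B' \<subseteq> ?t ` {..<l} \<and> (A' \<noteq> {} \<or> B' \<noteq> {}) \<longrightarrow> A' = ?s ` {..<k} \<and> B' = ?t ` {..<l}"
    proof (intro allI impI)
      fix A' B' assume h: "is_top (i0+k) (j0+l) ?C A' B' \<and> A' \<subseteq> ?s ` {..<k} \<and> B' \<subseteq> ?t ` {..<l} \<and> (A' \<noteq> {} \<or> B' \<noteq> {})"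
      define A0 where "A0 = {u \<in> {..<k}. u + i0 \<in> A'}"
      define B0 where "B0 = {w \<in> {..<l}. w + j0 \<in> B'}"
      have hA: "A' \<subseteq> ?s ` {..<k}" and hB: "B' \<subseteq> ?t ` {..<l}" using h by auto
      have eA: "?s ` A0 = A'"
      proof (intro set_eqI iffI)
        fix x assume "x \<in> ?s ` A0" then show "x \<in> A'" unfolding A0_def by auto
      next
        fix x assume x: "x \<in> A'"
        then obtain u where u: "u < k" "x = u + i0" using hA by auto
        then show "x \<in> ?s ` A0" unfolding A0_def using x by auto
      qed
      have eB: "?t ` B0 = B'"
      proof (intro set_eqI iffI)
        fix x assume "x \<in> ?t ` B0" then show "x \<in> B'" unfolding B0_def by auto
      next
        fix x assume x: "x \<in> B'"
        then obtain u where u: "u < l" "x = u + j0" using hB by auto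
        then show "x \<in> ?t ` B0" unfolding B0_def using x by auto
      qed
      have s0: "A0 \<subseteq> {..<k}" "B0 \<subseteq> {..<l}" unfolding A0_def B0_def by auto
      have "is_top (i0+k) (j0+l) ?C A' B'" using h by simp
      then have "is_top k l F A0 B0" using cat_top[of A0 k B0 l i0 j0 E F] s0 eA eB by simp
      moreover have "A0 \<noteq> {} \<or> B0 \<noteq> {}" using h eA eB by auto
      ultimately have "A0 = {..<k} \<and> B0 = {..<l}" using spec[OF spec[OF H, of A0], of B0] s0 by blast
      then show "A' = ?s ` {..<k} \<and> B' = ?t ` {..<l}" using eA eB by auto
    qed
  qed
  have t: "is_top (i0 + k) (j0 + l) ?C (?s ` {..<k}) (?t ` {..<l}) \<longleftrightarrow> is_top k l F {..<k} {..<l}"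
    using cat_top[of "{..<k}" k "{..<l}" l i0 j0 E F] by simp
  have ne: "(?s ` {..<k} \<noteq> {} \<or> ?t ` {..<l} \<noteq> {}) \<longleftrightarrow> ({..<k} \<noteq> {} \<or> {..<l} \<noteq> ({}::nat set))" by auto
  have cc: "\<And>a a' b b' c c'. a = a' \<Longrightarrow> b = b' \<Longrightarrow> c = c' \<Longrightarrow> (a \<and> b \<and> c) = (a' \<and> b' \<and> c')" by simp
  show ?thesis unfolding R mintop_def by (rule cc[OF t ne sub])
qed

lemma cat_Class:
  assumes "indec k l F"
  shows "cat i0 j0 E k l F \<in> Class (i0 + k) (j0 + l) k l"
proof -
  have "mintop (i0 + k) (j0 + l) (cat i0 j0 E k l F) {i0..<i0 + k} {j0..<j0 + l}"
    using assms cat_mintop_iff[of i0 k j0 l E F] unfolding indec_def by auto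
  moreover have "card {i0..<i0 + k} = k" "card {j0..<j0 + l} = l" by auto
  ultimately show ?thesis using cat_in unfolding Class_def by blast
qed

lemma cat_resp:
  assumes I1: "isoby i0 j0 f1 g1 E E'" and I2: "isoby k l f2 g2 F F'"
  shows "isoby (i0 + k) (j0 + l) (\<lambda>u. if u < i0 then f1 u else f2 (u - i0) + i0)
     (\<lambda>w. if w < j0 then g1 w else g2 (w - j0) + j0) (cat i0 j0 E k l F) (cat i0 j0 E' k l F')"
proof -
  define f where "f = (\<lambda>u. if u < i0 then f1 u else f2 (u - i0) + i0)"
  define g where "g = (\<lambda>w. if w < j0 then g1 w else g2 (w - j0) + j0)"
  have f1: "inj_on f1 {..<i0}" "\<And>u. u < i0 \<Longrightarrow> f1 u < i0" and g1: "inj_on g1 {..<j0}" "\<And>w. w < j0 \<Longrightarrow> g1 w < j0"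
    and f2: "inj_on f2 {..<k}" "\<And>u. u < k \<Longrightarrow> f2 u < k" and g2: "inj_on g2 {..<l}" "\<And>w. w < l \<Longrightarrow> g2 w < l"
    using I1 I2 unfolding isoby_def by auto
  have pE: "\<And>u w. u < i0 \<Longrightarrow> w < j0 \<Longrightarrow> (f1 u, g1 w) \<in> E' \<longleftrightarrow> (u, w) \<in> E" using I1 unfolding isoby_def by auto
  have pF: "\<And>u w. u < k \<Longrightarrow> w < l \<Longrightarrow> (f2 u, g2 w) \<in> F' \<longleftrightarrow> (u, w) \<in> F" using I2 unfolding isoby_def by auto
  have injf: "inj_on f {..<i0 + k}"
  proof (rule inj_onI)
    fix x y assume x: "x \<in> {..<i0 + k}" and y: "y \<in> {..<i0 + k}" and e: "f x = f y"
    show "x = y"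
    proof (cases "x < i0"; cases "y < i0")
      assume "x < i0" "y < i0" then show ?thesis using e f1(1) unfolding f_def inj_on_def by auto
    next
      assume "x < i0" "\<not> y < i0" then show ?thesis using e f1(2)[of x] unfolding f_def by auto
    next
      assume "\<not> x < i0" "y < i0" then show ?thesis using e f1(2)[of y] unfolding f_def by auto
    next
      assume a: "\<not> x < i0" "\<not> y < i0"
      then have "f2 (x - i0) = f2 (y - i0)" using e unfolding f_def by auto
      then have "x - i0 = y - i0" using f2(1) x y a unfolding inj_on_def by auto
      then show ?thesis using a by auto
    qed
  qed
  have injg: "inj_on g {..<j0 + l}"
  proof (rule inj_onI)
    fix x y assume x: "x \<in> {..<j0 + l}" and y: "y \<in> {..<j0 + l}" and e: "g x = g y"
    show "x = y"
    proof (cases "x < j0"; cases "y < j0")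
      assume "x < j0" "y < j0" then show ?thesis using e g1(1) unfolding g_def inj_on_def by auto
    next
      assume "x < j0" "\<not> y < j0" then show ?thesis using e g1(2)[of x] unfolding g_def by auto
    next
      assume "\<not> x < j0" "y < j0" then show ?thesis using e g1(2)[of y] unfolding g_def by auto
    next
      assume a: "\<not> x < j0" "\<not> y < j0"
      then have "g2 (x - j0) = g2 (y - j0)" using e unfolding g_def by auto
      then have "x - j0 = y - j0" using g2(1) x y a unfolding inj_on_def by auto
      then show ?thesis using a by auto
    qed
  qed
  have intf: "f ` {..<i0 + k} \<subseteq> {..<i0 + k}"
  proof
    fix y assume "y \<in> f ` {..<i0 + k}"
    then obtain x where x: "x < i0 + k" "y = f x" by auto
    show "y \<in> {..<i0 + k}" using x f1(2)[of x] f2(2)[of "x - i0"] unfolding f_def by (cases "x < i0") auto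
  qed
  have intg: "g ` {..<j0 + l} \<subseteq> {..<j0 + l}"
  proof
    fix y assume "y \<in> g ` {..<j0 + l}"
    then obtain x where x: "x < j0 + l" "y = g x" by auto
    show "y \<in> {..<j0 + l}" using x g1(2)[of x] g2(2)[of "x - j0"] unfolding g_def by (cases "x < j0") auto
  qed
  have pw: "(f u, g w) \<in> cat i0 j0 E' k l F' \<longleftrightarrow> (u, w) \<in> cat i0 j0 E k l F" if u: "u < i0 + k" and w: "w < j0 + l" for u w
  proof (cases "u < i0"; cases "w < j0")
    assume a: "u < i0" "w < j0"
    then show ?thesis using cat_lo[of "f1 u" i0 "g1 w" j0 E' k l F'] cat_lo[of u i0 w j0 E k l F] f1(2) g1(2) pE
      unfolding f_def g_def by auto
  next
    assume a: "u < i0" "\<not> w < j0"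
    have "(f u, g w) \<in> cat i0 j0 E' k l F'" using a f1(2)[of u] g2(2)[of "w - j0"] w
      unfolding f_def g_def by (intro cat_cross1) auto
    moreover have "(u, w) \<in> cat i0 j0 E k l F" using a w by (intro cat_cross1) auto
    ultimately show ?thesis by simp
  next
    assume a: "\<not> u < i0" "w < j0"
    have "(f u, g w) \<notin> cat i0 j0 E' k l F'" using a g1(2)[of w] unfolding f_def g_def by (intro cat_cross2) auto
    moreover have "(u, w) \<notin> cat i0 j0 E k l F" using a by (intro cat_cross2) auto
    ultimately show ?thesis by simp
  next
    assume a: "\<not> u < i0" "\<not> w < j0"
    define u' where "u' = u - i0"
    define w' where "w' = w - j0"
    have uw: "u = u' + i0" "w = w' + j0" "u' < k" "w' < l" using a u w unfolding u'_def w'_def by auto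
    have "(f u, g w) = (f2 u' + i0, g2 w' + j0)" using a unfolding f_def g_def u'_def w'_def by auto
    then have "(f u, g w) \<in> cat i0 j0 E' k l F' \<longleftrightarrow> (f2 u', g2 w') \<in> F'"
      using cat_hi[of "f2 u'" k "g2 w'" l i0 j0 E' F'] f2(2) g2(2) uw by auto
    also have "\<dots> \<longleftrightarrow> (u', w') \<in> F" using pF uw by auto
    also have "\<dots> \<longleftrightarrow> (u, w) \<in> cat i0 j0 E k l F" using cat_hi[of u' k w' l i0 j0 E F] uw by auto
    finally show ?thesis .
  qed
  have pw': "\<forall>u<i0 + k. \<forall>w<j0 + l. (f u, g w) \<in> cat i0 j0 E' k l F' \<longleftrightarrow> (u, w) \<in> cat i0 j0 E k l F"
    using pw by blast
  have "isoby (i0 + k) (j0 + l) f g (cat i0 j0 E k l F) (cat i0 j0 E' k l F')"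
    unfolding isoby_def using injf injg intf intg pw' cat_in by (intro conjI)
  then show ?thesis unfolding f_def g_def .
qed

lemma cat_same:
  assumes I: "isoby (i0 + k) (j0 + l) f g (cat i0 j0 E k l F) (cat i0 j0 E' k l F')"
    and E: "E \<in> bigraphs i0 j0" "E' \<in> bigraphs i0 j0" and F: "F \<in> bigraphs k l" "F' \<in> bigraphs k l"
    and fR: "f ` {i0..<i0 + k} = {i0..<i0 + k}" and gR: "g ` {j0..<j0 + l} = {j0..<j0 + l}"
  shows "isoby i0 j0 f g E E' \<and> isoby k l (\<lambda>u. f (u + i0) - i0) (\<lambda>w. g (w + j0) - j0) F F'"
proof -
  have fi: "inj_on f {..<i0 + k}" "f ` {..<i0 + k} = {..<i0 + k}" and gi: "inj_on g {..<j0 + l}" "g ` {..<j0 + l} = {..<j0 + l}"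
    using I endo_surj unfolding isoby_def by auto
  have pw: "\<And>u w. u < i0 + k \<Longrightarrow> w < j0 + l \<Longrightarrow> (f u, g w) \<in> cat i0 j0 E' k l F' \<longleftrightarrow> (u, w) \<in> cat i0 j0 E k l F"
    using I unfolding isoby_def by auto
  have dl1: "{..<i0} = {..<i0 + k} - {i0..<i0 + k}" by auto
  have dl2: "{..<j0} = {..<j0 + l} - {j0..<j0 + l}" by auto
  have flo: "f ` {..<i0} = {..<i0}"
  proof -
    have "f ` ({..<i0 + k} - {i0..<i0 + k}) = f ` {..<i0 + k} - f ` {i0..<i0 + k}"
      by (rule inj_on_image_set_diff[OF fi(1)]) auto
    then have "f ` ({..<i0 + k} - {i0..<i0 + k}) = {..<i0 + k} - {i0..<i0 + k}" using fi(2) fR by simp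
    then show ?thesis using dl1 by simp
  qed
  have glo: "g ` {..<j0} = {..<j0}"
  proof -
    have "g ` ({..<j0 + l} - {j0..<j0 + l}) = g ` {..<j0 + l} - g ` {j0..<j0 + l}"
      by (rule inj_on_image_set_diff[OF gi(1)]) auto
    then have "g ` ({..<j0 + l} - {j0..<j0 + l}) = {..<j0 + l} - {j0..<j0 + l}" using gi(2) gR by simp
    then show ?thesis using dl2 by simp
  qed
  have f1: "\<And>u. u < i0 \<Longrightarrow> f u < i0" using flo by auto
  have g1: "\<And>w. w < j0 \<Longrightarrow> g w < j0" using glo by auto
  have f2: "\<And>u. u < k \<Longrightarrow> i0 \<le> f (u + i0) \<and> f (u + i0) < i0 + k"
  proof -
    fix u assume "u < k" then have "u + i0 \<in> {i0..<i0 + k}" by auto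
    then have "f (u + i0) \<in> {i0..<i0 + k}" using fR by blast
    then show "i0 \<le> f (u + i0) \<and> f (u + i0) < i0 + k" by auto
  qed
  have g2: "\<And>w. w < l \<Longrightarrow> j0 \<le> g (w + j0) \<and> g (w + j0) < j0 + l"
  proof -
    fix w assume "w < l" then have "w + j0 \<in> {j0..<j0 + l}" by auto
    then have "g (w + j0) \<in> {j0..<j0 + l}" using gR by blast
    then show "j0 \<le> g (w + j0) \<and> g (w + j0) < j0 + l" by auto
  qed
  have A: "isoby i0 j0 f g E E'"
  proof -
    have "inj_on f {..<i0}" "inj_on g {..<j0}" using fi(1) gi(1) by (auto intro: inj_on_subset)
    moreover have "\<forall>u<i0. \<forall>w<j0. (f u, g w) \<in> E' \<longleftrightarrow> (u, w) \<in> E"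
    proof (intro allI impI)
      fix u w assume u: "u < i0" and w: "w < j0"
      have "(f u, g w) \<in> E' \<longleftrightarrow> (f u, g w) \<in> cat i0 j0 E' k l F'" using cat_lo f1 g1 u w by simp
      also have "\<dots> \<longleftrightarrow> (u, w) \<in> cat i0 j0 E k l F" using pw u w by simp
      also have "\<dots> \<longleftrightarrow> (u, w) \<in> E" using cat_lo u w by simp
      finally show "(f u, g w) \<in> E' \<longleftrightarrow> (u, w) \<in> E" .
    qed
    ultimately show ?thesis unfolding isoby_def using flo glo E by (intro conjI) auto
  qed
  define f' where "f' = (\<lambda>u. f (u + i0) - i0)"
  define g' where "g' = (\<lambda>w. g (w + j0) - j0)"
  have f'e: "\<And>u. u < k \<Longrightarrow> f' u + i0 = f (u + i0) \<and> f' u < k" unfolding f'_def using f2 by fastforce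
  have g'e: "\<And>w. w < l \<Longrightarrow> g' w + j0 = g (w + j0) \<and> g' w < l" unfolding g'_def using g2 by fastforce
  have B: "isoby k l f' g' F F'"
  proof -
    have "inj_on f' {..<k}"
    proof (rule inj_onI)
      fix x y assume x: "x \<in> {..<k}" and y: "y \<in> {..<k}" and e: "f' x = f' y"
      then have "f (x + i0) = f (y + i0)" using f'e[of x] f'e[of y] by auto
      then have "x + i0 = y + i0" using inj_onD[OF fi(1), of "x + i0" "y + i0"] x y by auto
      then show "x = y" by simp
    qed
    moreover have "inj_on g' {..<l}"
    proof (rule inj_onI)
      fix x y assume x: "x \<in> {..<l}" and y: "y \<in> {..<l}" and e: "g' x = g' y"
      then have "g (x + j0) = g (y + j0)" using g'e[of x] g'e[of y] by auto
      then have "x + j0 = y + j0" using inj_onD[OF gi(1), of "x + j0" "y + j0"] x y by auto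
      then show "x = y" by simp
    qed
    moreover have "f' ` {..<k} \<subseteq> {..<k}" "g' ` {..<l} \<subseteq> {..<l}" using f'e g'e by auto
    moreover have "\<forall>u<k. \<forall>w<l. (f' u, g' w) \<in> F' \<longleftrightarrow> (u, w) \<in> F"
    proof (intro allI impI)
      fix u w assume u: "u < k" and w: "w < l"
      have "(f' u + i0, g' w + j0) \<in> cat i0 j0 E' k l F' \<longleftrightarrow> (f' u, g' w) \<in> F'"
        by (rule cat_hi) (use f'e g'e u w in auto)
      then have "(f' u, g' w) \<in> F' \<longleftrightarrow> (f' u + i0, g' w + j0) \<in> cat i0 j0 E' k l F'" by simp
      also have "\<dots> \<longleftrightarrow> (f (u + i0), g (w + j0)) \<in> cat i0 j0 E' k l F'" using f'e g'e u w by simp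
      also have "\<dots> \<longleftrightarrow> (u + i0, w + j0) \<in> cat i0 j0 E k l F" using pw u w by simp
      also have "\<dots> \<longleftrightarrow> (u, w) \<in> F" using cat_hi u w by simp
      finally show "(f' u, g' w) \<in> F' \<longleftrightarrow> (u, w) \<in> F" .
    qed
    ultimately show ?thesis unfolding isoby_def using F by (intro conjI) auto
  qed
  show ?thesis using A B unfolding f'_def g'_def by blast
qed

definition sw :: "nat \<Rightarrow> nat \<Rightarrow> nat \<Rightarrow> nat" where
  "sw a b x = (if x = a then b else if x = b then a else x)"

lemma sw_inj: "inj_on (sw a b) S"
  unfolding sw_def inj_on_def by auto

lemma sw_into: "a < n \<Longrightarrow> b < n \<Longrightarrow> sw a b ` {..<n} \<subseteq> {..<n}"
  unfolding sw_def by auto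

lemma sw_auto1:
  assumes "a < i" "b < i" "E \<in> bigraphs i j" "\<forall>w<j. (a, w) \<notin> E \<and> (b, w) \<notin> E"
  shows "isoby i j (sw a b) id E E"
  unfolding isoby_def using assms sw_inj sw_into by (auto simp: sw_def)

lemma sw_auto2:
  assumes "a < j" "b < j" "E \<in> bigraphs i j" "\<forall>u<i. (u, a) \<in> E \<and> (u, b) \<in> E"
  shows "isoby i j id (sw a b) E E"
  unfolding isoby_def using assms sw_inj sw_into by (auto simp: sw_def)




lemma indec_bigraphs: "indec k l F \<Longrightarrow> F \<in> bigraphs k l"
  unfolding indec_def by auto

lemma cat_reflect:
  assumes F: "indec k l F" "indec k l F'" and E: "E \<in> bigraphs i0 j0" "E' \<in> bigraphs i0 j0"
    and I: "isoby (i0 + k) (j0 + l) f g (cat i0 j0 E k l F) (cat i0 j0 E' k l F')"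
  shows "(E, E') \<in> bigraph_iso i0 j0 \<and> (F, F') \<in> bigraph_iso k l"
proof -
  let ?C = "cat i0 j0 E k l F" and ?C' = "cat i0 j0 E' k l F'"
  let ?R1 = "{i0..<i0 + k}" and ?R2 = "{j0..<j0 + l}"
  have m: "mintop (i0 + k) (j0 + l) ?C ?R1 ?R2" using F(1) cat_mintop_iff unfolding indec_def by blast
  have m': "mintop (i0 + k) (j0 + l) ?C' ?R1 ?R2" using F(2) cat_mintop_iff unfolding indec_def by blast
  have m2: "mintop (i0 + k) (j0 + l) ?C' (f ` ?R1) (g ` ?R2)" using isoby_mintop[OF I m] .
  have Cb': "?C' \<in> bigraphs (i0 + k) (j0 + l)" by (rule cat_in)
  have key: "\<exists>f' g'. isoby (i0 + k) (j0 + l) f' g' ?C ?C' \<and> f' ` ?R1 = ?R1 \<and> g' ` ?R2 = ?R2"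
  proof (cases "?R1 = f ` ?R1 \<and> ?R2 = g ` ?R2")
    case True then show ?thesis using I by (intro exI[of _ f] exI[of _ g]) simp
  next
    case False
    from mintops_distinct[OF m' m2 False]
    show ?thesis
    proof (elim disjE exE conjE)
      fix u v assume h: "?R1 = {u}" "f ` ?R1 = {v}" "?R2 = {}" "g ` ?R2 = {}"
      have t1: "is_top (i0 + k) (j0 + l) ?C' {u} {}" using m' h unfolding mintop_def by simp
      have t2: "is_top (i0 + k) (j0 + l) ?C' {v} {}" using m2 h unfolding mintop_def by simp
      have uv: "u < i0 + k" "v < i0 + k" using t1 t2 unfolding is_top_def by auto
      have iso: "\<forall>w<j0 + l. (v, w) \<notin> ?C' \<and> (u, w) \<notin> ?C'" using t1 t2 unfolding is_top_def by auto
      have A: "isoby (i0 + k) (j0 + l) (sw v u) id ?C' ?C'" by (rule sw_auto1) (use uv iso Cb' in auto)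
      have I2: "isoby (i0 + k) (j0 + l) (sw v u \<circ> f) (id \<circ> g) ?C ?C'" by (rule isoby_trans[OF I A])
      have "(sw v u \<circ> f) ` ?R1 = ?R1" using h by (simp add: image_comp[symmetric] sw_def)
      moreover have "(id \<circ> g) ` ?R2 = ?R2" using h by simp
      ultimately show ?thesis using I2 by blast
    next
      fix u v assume h: "?R2 = {u}" "g ` ?R2 = {v}" "?R1 = {}" "f ` ?R1 = {}"
      have t1: "is_top (i0 + k) (j0 + l) ?C' {} {u}" using m' h unfolding mintop_def by simp
      have t2: "is_top (i0 + k) (j0 + l) ?C' {} {v}" using m2 h unfolding mintop_def by simp
      have uv: "u < j0 + l" "v < j0 + l" using t1 t2 unfolding is_top_def by auto
      have iso: "\<forall>w<i0 + k. (w, v) \<in> ?C' \<and> (w, u) \<in> ?C'" using t1 t2 unfolding is_top_def by auto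
      have A: "isoby (i0 + k) (j0 + l) id (sw v u) ?C' ?C'" by (rule sw_auto2) (use uv iso Cb' in auto)
      have I2: "isoby (i0 + k) (j0 + l) (id \<circ> f) (sw v u \<circ> g) ?C ?C'" by (rule isoby_trans[OF I A])
      have "(sw v u \<circ> g) ` ?R2 = ?R2" using h by (simp add: image_comp[symmetric] sw_def)
      moreover have "(id \<circ> f) ` ?R1 = ?R1" using h by simp
      ultimately show ?thesis using I2 by blast
    qed
  qed
  then obtain f' g' where I': "isoby (i0 + k) (j0 + l) f' g' ?C ?C'" "f' ` ?R1 = ?R1" "g' ` ?R2 = ?R2" by blast
  from cat_same[OF I'(1) E indec_bigraphs[OF F(1)] indec_bigraphs[OF F(2)] I'(2) I'(3)]
  show ?thesis unfolding iso_iff by blast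
qed

lemma isoby_image:
  assumes f: "inj_on f {..<i}" "f ` {..<i} \<subseteq> {..<i}" and g: "inj_on g {..<j}" "g ` {..<j} \<subseteq> {..<j}"
    and E: "E \<in> bigraphs i j"
  shows "isoby i j f g E ((\<lambda>(u, w). (f u, g w)) ` E)"
proof -
  let ?E' = "(\<lambda>(u, w). (f u, g w)) ` E"
  have Eb: "\<And>u w. (u, w) \<in> E \<Longrightarrow> u < i \<and> w < j" using E bigraphs_mem by blast
  have "?E' \<subseteq> {..<i} \<times> {..<j}"
  proof
    fix x assume "x \<in> ?E'"
    then obtain u w where uw: "(u, w) \<in> E" "x = (f u, g w)" by auto
    then have "u < i" "w < j" using Eb by auto
    then have "f u < i" "g w < j" using f(2) g(2) by auto
    then show "x \<in> {..<i} \<times> {..<j}" using uw by simp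
  qed
  then have Eb': "?E' \<in> bigraphs i j" unfolding bigraphs_def by simp
  have pw: "(f u, g w) \<in> ?E' \<longleftrightarrow> (u, w) \<in> E" if u: "u < i" and w: "w < j" for u w
  proof
    assume h: "(f u, g w) \<in> ?E'"
    then obtain u' w' where uw: "(u', w') \<in> E" "f u' = f u" "g w' = g w" by auto
    have b: "u' < i" "w' < j" using Eb[OF uw(1)] by auto
    have "u' = u" using inj_onD[OF f(1) uw(2)] b u by simp
    moreover have "w' = w" using inj_onD[OF g(1) uw(3)] b w by simp
    ultimately show "(u, w) \<in> E" using uw by simp
  next
    assume "(u, w) \<in> E"
    then show "(f u, g w) \<in> ?E'" by (rule rev_image_eqI) simp
  qed
  have "\<forall>u<i. \<forall>w<j. (f u, g w) \<in> ?E' \<longleftrightarrow> (u, w) \<in> E" using pw by blast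
  then show ?thesis unfolding isoby_def using f g E Eb' by (intro conjI)
qed

lemma split_perm:
  fixes n m :: nat
  assumes A: "A \<subseteq> {..<n + m}" "card A = m"
  shows "\<exists>f. inj_on f {..<n + m} \<and> f ` {..<n + m} \<subseteq> {..<n + m} \<and> f ` A = {n..<n + m}"
proof -
  have fA: "finite A" using A(1) finite_subset by blast
  obtain h2 where h2: "h2 ` A \<subseteq> {n..<n + m}" "inj_on h2 A"
    using card_le_inj[of A "{n..<n + m}"] fA A by auto
  have cd: "card ({..<n + m} - A) = n" using A fA by (simp add: card_Diff_subset)
  obtain h1 where h1: "h1 ` ({..<n + m} - A) \<subseteq> {..<n}" "inj_on h1 ({..<n + m} - A)"
    using card_le_inj[of "{..<n + m} - A" "{..<n}"] cd by auto
  define f where "f = (\<lambda>x. if x \<in> A then h2 x else h1 x)"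
  have fi: "inj_on f {..<n + m}"
  proof (rule inj_onI)
    fix x y assume x: "x \<in> {..<n + m}" and y: "y \<in> {..<n + m}" and e: "f x = f y"
    show "x = y"
    proof (cases "x \<in> A"; cases "y \<in> A")
      assume "x \<in> A" "y \<in> A" then show ?thesis using e h2(2) unfolding f_def inj_on_def by auto
    next
      assume a: "x \<in> A" "y \<notin> A"
      then have "h2 x \<ge> n" "h1 y < n" using h1(1) h2(1) y by auto
      then show ?thesis using e a unfolding f_def by auto
    next
      assume a: "x \<notin> A" "y \<in> A"
      then have "h2 y \<ge> n" "h1 x < n" using h1(1) h2(1) x by auto
      then show ?thesis using e a unfolding f_def by auto
    next
      assume a: "x \<notin> A" "y \<notin> A"
      then show ?thesis using e h1(2) x y unfolding f_def inj_on_def by auto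
    qed
  qed
  have fint: "f ` {..<n + m} \<subseteq> {..<n + m}"
  proof
    fix y assume "y \<in> f ` {..<n + m}"
    then obtain x where x: "x < n + m" "y = f x" by auto
    show "y \<in> {..<n + m}"
    proof (cases "x \<in> A")
      case True then show ?thesis using h2(1) x unfolding f_def by auto
    next
      case False then have "h1 x < n" using h1(1) x by auto
      then show ?thesis using False x unfolding f_def by auto
    qed
  qed
  have fAe: "f ` A = h2 ` A" unfolding f_def by auto
  have "card (h2 ` A) = m" using card_image[OF h2(2)] A by simp
  then have "h2 ` A = {n..<n + m}" using h2(1) by (intro card_subset_eq) auto
  then show ?thesis using fi fint fAe by blast
qed

lemma cat_surj:
  assumes c: "c \<in> Class (i0 + k) (j0 + l) k l"
  shows "\<exists>E\<in>bigraphs i0 j0. \<exists>F. indec k l F \<and> (c, cat i0 j0 E k l F) \<in> bigraph_iso (i0 + k) (j0 + l)"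
proof -
  obtain A B where cb: "c \<in> bigraphs (i0 + k) (j0 + l)" and m: "mintop (i0 + k) (j0 + l) c A B"
    and cA: "card A = k" and cB: "card B = l" using c unfolding Class_def by auto
  have AB: "A \<subseteq> {..<i0 + k}" "B \<subseteq> {..<j0 + l}" using m unfolding mintop_def is_top_def by auto
  obtain f where f: "inj_on f {..<i0 + k}" "f ` {..<i0 + k} \<subseteq> {..<i0 + k}" "f ` A = {i0..<i0 + k}"
    using split_perm[OF AB(1) cA] by blast
  obtain g where g: "inj_on g {..<j0 + l}" "g ` {..<j0 + l} \<subseteq> {..<j0 + l}" "g ` B = {j0..<j0 + l}"
    using split_perm[OF AB(2) cB] by blast
  define c' where "c' = (\<lambda>(u, w). (f u, g w)) ` c"
  have I: "isoby (i0 + k) (j0 + l) f g c c'" unfolding c'_def by (rule isoby_image[OF f(1,2) g(1,2) cb])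
  have m': "mintop (i0 + k) (j0 + l) c' {i0..<i0 + k} {j0..<j0 + l}" using isoby_mintop[OF I m] f(3) g(3) by simp
  have c'b: "c' \<in> bigraphs (i0 + k) (j0 + l)" using I unfolding isoby_def by auto
  have tp: "is_top (i0 + k) (j0 + l) c' {i0..<i0 + k} {j0..<j0 + l}" using m' unfolding mintop_def by auto
  have t1: "\<And>u w. u < i0 \<Longrightarrow> j0 \<le> w \<Longrightarrow> w < j0 + l \<Longrightarrow> (u, w) \<in> c'" using tp unfolding is_top_def by auto
  have t2: "\<And>u w. i0 \<le> u \<Longrightarrow> u < i0 + k \<Longrightarrow> w < j0 \<Longrightarrow> (u, w) \<notin> c'" using tp unfolding is_top_def by auto
  have cbm: "\<And>u w. (u, w) \<in> c' \<Longrightarrow> u < i0 + k \<and> w < j0 + l" using c'b bigraphs_mem by blast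
  define E0 where "E0 = {(u, w) \<in> c'. u < i0 \<and> w < j0}"
  define F0 where "F0 = {(u, w). u < k \<and> w < l \<and> (u + i0, w + j0) \<in> c'}"
  have E0b: "E0 \<in> bigraphs i0 j0" unfolding E0_def bigraphs_def by auto
  have F0b: "F0 \<in> bigraphs k l" unfolding F0_def bigraphs_def by auto
  have ceq: "c' = cat i0 j0 E0 k l F0"
  proof (intro set_eqI iffI)
    fix x assume x: "x \<in> c'"
    obtain u w where uw: "x = (u, w)" by force
    have b: "u < i0 + k" "w < j0 + l" using cbm x uw by auto
    show "x \<in> cat i0 j0 E0 k l F0"
    proof (cases "u < i0")
      case True then show ?thesis using x uw b unfolding cat_def E0_def by auto
    next
      case False
      then have "j0 \<le> w" using t2[of u w] x uw b by force
      moreover have "(u - i0, w - j0) \<in> F0" unfolding F0_def using False \<open>j0 \<le> w\<close> b x uw by auto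
      ultimately show ?thesis using False uw b unfolding cat_def by auto
    qed
  next
    fix x assume x: "x \<in> cat i0 j0 E0 k l F0"
    obtain u w where uw: "x = (u, w)" by force
    have b: "u < i0 + k" "w < j0 + l" using x uw unfolding cat_def by auto
    show "x \<in> c'"
    proof (cases "u < i0")
      case True
      show ?thesis
      proof (cases "w < j0")
        case True then show ?thesis using x uw \<open>u < i0\<close> unfolding cat_def E0_def by auto
      next
        case False then show ?thesis using t1 \<open>u < i0\<close> b uw by auto
      qed
    next
      case False
      then have "(u - i0, w - j0) \<in> F0" "j0 \<le> w" using x uw unfolding cat_def by auto
      then show ?thesis using False unfolding F0_def uw by auto
    qed
  qed
  have "indec k l F0" using m' F0b cat_mintop_iff[of i0 k j0 l E0 F0] unfolding ceq indec_def by simp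
  moreover have "(c, cat i0 j0 E0 k l F0) \<in> bigraph_iso (i0 + k) (j0 + l)" using I ceq iso_iff by blast
  ultimately show ?thesis using E0b by blast
qed




lemma finite_bigraphs: "finite (bigraphs i j)"
proof -
  have "bigraphs i j = Pow ({..<i} \<times> {..<j})" unfolding bigraphs_def by auto
  then show ?thesis by simp
qed

lemma indec_iso:
  assumes "indec k l F" "(F, F') \<in> bigraph_iso k l"
  shows "indec k l F'"
proof -
  obtain f g where I: "isoby k l f g F F'" using assms(2) iso_iff by blast
  have "f ` {..<k} = {..<k}" "g ` {..<l} = {..<l}" using I endo_surj unfolding isoby_def by auto
  then have "mintop k l F' {..<k} {..<l}" using isoby_mintop[OF I] assms(1) unfolding indec_def by metis
  then show ?thesis using I unfolding indec_def isoby_def by auto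
qed

definition cI :: "nat \<Rightarrow> nat \<Rightarrow> nat" where
  "cI k l = card ({F. indec k l F} // bigraph_iso k l)"

lemma quot_restrict:
  assumes "\<And>x y. x \<in> S \<Longrightarrow> (x, y) \<in> R \<Longrightarrow> y \<in> S"
  shows "S // (R \<inter> S \<times> S) = S // R"
proof -
  have "(R \<inter> S \<times> S) `` {x} = R `` {x}" if "x \<in> S" for x using assms that by auto
  then show ?thesis unfolding quotient_def by auto
qed

lemma Class_count:
  "card (Class (i0 + k) (j0 + l) k l // bigraph_iso (i0 + k) (j0 + l)) = bcount i0 j0 * cI k l"
proof -
  let ?B = "{F. indec k l F}"
  let ?RB = "bigraph_iso k l \<inter> ?B \<times> ?B"
  have eB: "equiv ?B ?RB"
  proof -
    have e: "equiv (bigraphs k l) (bigraph_iso k l)" by (rule equiv_iso)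
    have "refl_on ?B ?RB" using e indec_bigraphs unfolding equiv_def refl_on_def by blast
    moreover have "sym ?RB" using e unfolding equiv_def sym_def by blast
    moreover have "trans ?RB" using e unfolding equiv_def trans_def by blast
    ultimately show ?thesis by (intro equivI) auto
  qed
  have qB: "?B // ?RB = ?B // bigraph_iso k l" by (rule quot_restrict) (use indec_iso in blast)
  have fB: "finite ?B" using finite_bigraphs[of k l] indec_bigraphs by (metis finite_subset mem_Collect_eq subsetI)
  have CD: "Class (i0 + k) (j0 + l) k l \<subseteq> bigraphs (i0 + k) (j0 + l)" unfolding Class_def by auto
  have "card (Class (i0 + k) (j0 + l) k l // bigraph_iso (i0 + k) (j0 + l)) = card (bigraphs i0 j0 // bigraph_iso i0 j0) * card (?B // ?RB)"
  proof (rule card_quot_prod[where \<Phi> = "\<lambda>E F. cat i0 j0 E k l F", OF equiv_iso eB equiv_iso CD finite_bigraphs fB])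
    fix a b assume "a \<in> bigraphs i0 j0" "b \<in> ?B"
    then show "cat i0 j0 a k l b \<in> Class (i0 + k) (j0 + l) k l" using cat_Class by auto
  next
    fix a a' b b' assume a: "a \<in> bigraphs i0 j0" "a' \<in> bigraphs i0 j0" and b: "b \<in> ?B" "b' \<in> ?B"
    show "(cat i0 j0 a k l b, cat i0 j0 a' k l b') \<in> bigraph_iso (i0 + k) (j0 + l) \<longleftrightarrow> (a, a') \<in> bigraph_iso i0 j0 \<and> (b, b') \<in> ?RB"
    proof
      assume "(cat i0 j0 a k l b, cat i0 j0 a' k l b') \<in> bigraph_iso (i0 + k) (j0 + l)"
      then obtain f g where "isoby (i0 + k) (j0 + l) f g (cat i0 j0 a k l b) (cat i0 j0 a' k l b')" using iso_iff by blast
      then show "(a, a') \<in> bigraph_iso i0 j0 \<and> (b, b') \<in> ?RB" using cat_reflect a b by blast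
    next
      assume "(a, a') \<in> bigraph_iso i0 j0 \<and> (b, b') \<in> ?RB"
      then obtain f1 g1 f2 g2 where "isoby i0 j0 f1 g1 a a'" "isoby k l f2 g2 b b'" using iso_iff by blast
      from cat_resp[OF this] show "(cat i0 j0 a k l b, cat i0 j0 a' k l b') \<in> bigraph_iso (i0 + k) (j0 + l)"
        using iso_iff by blast
    qed
  next
    fix c assume "c \<in> Class (i0 + k) (j0 + l) k l"
    then show "\<exists>a\<in>bigraphs i0 j0. \<exists>b\<in>?B. (c, cat i0 j0 a k l b) \<in> bigraph_iso (i0 + k) (j0 + l)"
      using cat_surj by blast
  qed
  then show ?thesis unfolding qB bcount_def cI_def .
qed

lemma bcount_rec:
  assumes ij: "(i, j) \<noteq> (0, 0)"
  shows "bcount i j = (\<Sum>a\<le>i. \<Sum>b\<le>j. bcount a b * cI (i - a) (j - b))"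
proof -
  let ?R = "bigraph_iso i j"
  let ?Q = "\<lambda>(a, b). Class i j (i - a) (j - b) // ?R"
  have e: "equiv (bigraphs i j) ?R" by (rule equiv_iso)
  have un: "bigraphs i j // ?R = \<Union> (?Q ` ({..i} \<times> {..j}))"
  proof (intro set_eqI iffI)
    fix X assume "X \<in> bigraphs i j // ?R"
    then obtain E where E: "E \<in> bigraphs i j" "X = ?R `` {E}" by (auto elim: quotientE)
    obtain A B where m: "mintop i j E A B" using mintop_exists[OF E(1) ij] by blast
    have AB: "A \<subseteq> {..<i}" "B \<subseteq> {..<j}" using m unfolding mintop_def is_top_def by auto
    have cA: "card A \<le> i" "card B \<le> j" using card_mono[OF _ AB(1)] card_mono[OF _ AB(2)] by auto
    have "E \<in> Class i j (i - (i - card A)) (j - (j - card B))" using E m cA unfolding Class_def by auto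
    from quotientI[OF this, of ?R] have "X \<in> ?Q (i - card A, j - card B)" using E(2) by simp
    moreover have "(i - card A, j - card B) \<in> {..i} \<times> {..j}" by simp
    ultimately show "X \<in> \<Union> (?Q ` ({..i} \<times> {..j}))" by (rule UN_I[rotated])
  next
    fix X assume "X \<in> \<Union> (?Q ` ({..i} \<times> {..j}))"
    then obtain p where p: "p \<in> {..i} \<times> {..j}" "X \<in> ?Q p" by blast
    obtain a b where ab: "p = (a, b)" by force
    have "X \<in> Class i j (i - a) (j - b) // ?R" using p(2) ab by simp
    then obtain E where "E \<in> Class i j (i - a) (j - b)" "X = ?R `` {E}" by (auto elim: quotientE)
    then show "X \<in> bigraphs i j // ?R" unfolding Class_def by (auto intro: quotientI)
  qed
  have disj: "\<forall>p\<in>{..i} \<times> {..j}. \<forall>q\<in>{..i} \<times> {..j}. p \<noteq> q \<longrightarrow> ?Q p \<inter> ?Q q = {}"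
  proof (intro ballI impI)
    fix p q assume p: "p \<in> {..i} \<times> {..j}" and q: "q \<in> {..i} \<times> {..j}" and ne: "p \<noteq> q"
    obtain a b a' b' where pq: "p = (a, b)" "q = (a', b')" by force
    show "?Q p \<inter> ?Q q = {}"
    proof (rule ccontr)
      assume "?Q p \<inter> ?Q q \<noteq> {}"
      then obtain X where X: "X \<in> Class i j (i - a) (j - b) // ?R" "X \<in> Class i j (i - a') (j - b') // ?R" using pq by auto
      obtain E where E: "E \<in> Class i j (i - a) (j - b)" "X = ?R `` {E}" using X(1) by (auto elim: quotientE)
      obtain E' where E': "E' \<in> Class i j (i - a') (j - b')" "X = ?R `` {E'}" using X(2) by (auto elim: quotientE)
      have "E \<in> bigraphs i j" "E' \<in> bigraphs i j" using E E' unfolding Class_def by auto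
      then have "(E, E') \<in> ?R" using E E' equiv_class_eq_iff[OF e] by blast
      then have "E' \<in> Class i j (i - a) (j - b)" using Class_iso E by blast
      then have "i - a = i - a' \<and> j - b = j - b'" using Class_unique E' by blast
      then show False using ne p q pq by auto
    qed
  qed
  have finQ: "finite (bigraphs i j // ?R)"
    by (rule finite_quotient[OF finite_bigraphs]) (use e in \<open>simp add: equiv_def\<close>)
  have fin: "\<forall>p\<in>{..i} \<times> {..j}. finite (?Q p)"
  proof
    fix p assume "p \<in> {..i} \<times> {..j}"
    obtain a b where ab: "p = (a, b)" by force
    have "Class i j (i - a) (j - b) // ?R \<subseteq> bigraphs i j // ?R" unfolding Class_def quotient_def by auto
    then show "finite (?Q p)" using finQ ab by (auto intro: finite_subset)
  qed
  have "bcount i j = (\<Sum>p\<in>{..i} \<times> {..j}. card (?Q p))"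
    unfolding bcount_def un by (rule card_UN_disjoint[OF _ fin disj]) simp
  also have "\<dots> = (\<Sum>a\<le>i. \<Sum>b\<le>j. card (Class i j (i - a) (j - b) // ?R))"
    by (simp add: sum.cartesian_product prod.case_distrib)
  also have "\<dots> = (\<Sum>a\<le>i. \<Sum>b\<le>j. bcount a b * cI (i - a) (j - b))"
  proof (intro sum.cong refl)
    fix a b assume a: "a \<in> {..i}" and b: "b \<in> {..j}"
    have "i = a + (i - a)" "j = b + (j - b)" using a b by auto
    then show "card (Class i j (i - a) (j - b) // ?R) = bcount a b * cI (i - a) (j - b)"
      using Class_count[of a "i - a" b "j - b"] by metis
  qed
  finally show ?thesis .
qed




lemma incomp_split:
  assumes nc: "\<not> connected_on S (incomp_graph S N)"
  shows "\<exists>Q\<subseteq>S. Q \<noteq> {} \<and> Q \<noteq> S \<and> (\<forall>p\<in>S - Q. \<forall>q\<in>Q. N p \<subseteq> N q)"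
proof -
  let ?R = "incomp_graph S N"
  obtain a b where ab: "a \<in> S" "b \<in> S" "(a, b) \<notin> ?R\<^sup>*" using nc unfolding connected_on_def by blast
  define K where "K = {x \<in> S. (a, x) \<in> ?R\<^sup>*}"
  have aK: "a \<in> K" using ab unfolding K_def by auto
  have bK: "b \<notin> K" using ab unfolding K_def by auto
  have KS: "K \<subseteq> S" unfolding K_def by auto
  have cmp: "N x \<subseteq> N y \<or> N y \<subseteq> N x" if x: "x \<in> K" and y: "y \<in> S - K" for x y
  proof (rule ccontr)
    assume "\<not> (N x \<subseteq> N y \<or> N y \<subseteq> N x)"
    then have "(x, y) \<in> ?R" using x y KS unfolding incomp_graph_def by auto
    then have "(a, y) \<in> ?R\<^sup>*" using x unfolding K_def by (auto intro: rtrancl_into_rtrancl)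
    then show False using y unfolding K_def by auto
  qed
  have dich: "(\<forall>x\<in>K. N x \<subseteq> N y) \<or> (\<forall>x\<in>K. N y \<subseteq> N x)" if y: "y \<in> S - K" for y
  proof -
    have inv: "(a, x) \<in> ?R\<^sup>* \<Longrightarrow> (N x \<subseteq> N y \<longleftrightarrow> N a \<subseteq> N y)" for x
    proof (induction rule: rtrancl_induct)
      case base then show ?case by simp
    next
      case (step x z)
      have zS: "z \<in> S" and xS: "x \<in> S" and inc: "\<not> N x \<subseteq> N z" "\<not> N z \<subseteq> N x"
        using step(2) unfolding incomp_graph_def by auto
      have xK: "x \<in> K" using step(1) xS unfolding K_def by auto
      have zK: "z \<in> K" using step(1,2) zS unfolding K_def by (auto intro: rtrancl_into_rtrancl)
      have "N z \<subseteq> N y \<longleftrightarrow> N x \<subseteq> N y"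
      proof
        assume zy: "N z \<subseteq> N y"
        show "N x \<subseteq> N y"
        proof (rule ccontr)
          assume "\<not> N x \<subseteq> N y"
          then have "N y \<subseteq> N x" using cmp[OF xK y] by blast
          then show False using zy inc by blast
        qed
      next
        assume xy: "N x \<subseteq> N y"
        show "N z \<subseteq> N y"
        proof (rule ccontr)
          assume "\<not> N z \<subseteq> N y"
          then have "N y \<subseteq> N z" using cmp[OF zK y] by blast
          then show False using xy inc by blast
        qed
      qed
      then show ?case using step(3) by simp
    qed
    show ?thesis
    proof (cases "N a \<subseteq> N y")
      case True
      then show ?thesis using inv unfolding K_def by blast
    next
      case False
      have "N y \<subseteq> N x" if "x \<in> K" for x
      proof -
        have "\<not> N x \<subseteq> N y" using inv[of x] that False unfolding K_def by blast
        then show ?thesis using cmp[OF that y] by blast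
      qed
      then show ?thesis by blast
    qed
  qed
  define U where "U = {y \<in> S - K. \<forall>x\<in>K. N x \<subseteq> N y}"
  define L where "L = S - K - U"
  have Lp: "\<forall>x\<in>K. N y \<subseteq> N x" if "y \<in> L" for y using dich[of y] that unfolding L_def U_def by blast
  show ?thesis
  proof (cases "L = {}")
    case True
    then have "U = S - K" unfolding L_def U_def by auto
    then have "U \<subseteq> S \<and> U \<noteq> {} \<and> U \<noteq> S \<and> (\<forall>p\<in>S - U. \<forall>q\<in>U. N p \<subseteq> N q)"
      using aK bK ab KS unfolding U_def by auto
    then show ?thesis by blast
  next
    case False
    have "(\<forall>p\<in>S - (K \<union> U). \<forall>q\<in>K \<union> U. N p \<subseteq> N q)"
    proof (intro ballI)
      fix p q assume p: "p \<in> S - (K \<union> U)" and q: "q \<in> K \<union> U"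
      have pL: "p \<in> L" using p unfolding L_def by auto
      show "N p \<subseteq> N q"
      proof (cases "q \<in> K")
        case True then show ?thesis using Lp[OF pL] by blast
      next
        case False
        then have "N a \<subseteq> N q" using q aK unfolding U_def by auto
        moreover have "N p \<subseteq> N a" using Lp[OF pL] aK by blast
        ultimately show ?thesis by blast
      qed
    qed
    moreover have "K \<union> U \<subseteq> S" "K \<union> U \<noteq> {}" "K \<union> U \<noteq> S" using aK KS False unfolding U_def L_def by auto
    ultimately show ?thesis by blast
  qed
qed

lemma closed_connected:
  assumes c: "connected_on S R" and T: "T \<subseteq> S"
    and pres: "\<And>x y. (x, y) \<in> R \<Longrightarrow> x \<in> T \<Longrightarrow> y \<in> T"
  shows "T = {} \<or> T = S"
proof (rule ccontr)
  assume "\<not> (T = {} \<or> T = S)"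
  then obtain a b where a: "a \<in> T" and b: "b \<in> S" "b \<notin> T" using T by blast
  have "(a, b) \<in> R\<^sup>*" using c a b T unfolding connected_on_def by blast
  then have "b \<in> T" using a by (induction rule: rtrancl_induct) (auto intro: pres)
  then show False using b by simp
qed

lemma sym_incomp: "(x, y) \<in> incomp_graph S N \<Longrightarrow> (y, x) \<in> incomp_graph S N"
  unfolding incomp_graph_def by auto

lemma const_not_connected:
  assumes "\<forall>a\<in>S. \<forall>b\<in>S. N a = N b" "x \<in> S" "y \<in> S" "x \<noteq> y"
  shows "\<not> connected_on S (incomp_graph S N)"
proof -
  have "incomp_graph S N = {}" unfolding incomp_graph_def using assms(1) by blast
  then have "(x, y) \<notin> (incomp_graph S N)\<^sup>*" using assms(4) by simp
  then show ?thesis using assms(2,3) unfolding connected_on_def by blast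
qed

lemma tangle_indec:
  assumes t: "is_tangle k l F"
  shows "indec k l F"
proof -
  have Fb: "F \<in> bigraphs k l" and kl: "k \<ge> 2" "l \<ge> 2"
    and c2: "connected_on {..<l} (incomp_graph {..<l} (nbhd2 F))"
    and c1: "connected_on {..<k} (incomp_graph {..<k} (nbhd1 F))" using t unfolding is_tangle_def by auto
  have Fm: "\<And>u w. (u, w) \<in> F \<Longrightarrow> u < k \<and> w < l" using Fb bigraphs_mem by blast
  have top: "is_top k l F {..<k} {..<l}" unfolding is_top_def by auto
  have min: "A' = {..<k} \<and> B' = {..<l}" if h: "is_top k l F A' B'" "A' \<noteq> {} \<or> B' \<noteq> {}" for A' B'
  proof -
    have AB: "A' \<subseteq> {..<k}" "B' \<subseteq> {..<l}"
      and t1: "\<And>u w. u < k \<Longrightarrow> u \<notin> A' \<Longrightarrow> w \<in> B' \<Longrightarrow> (u, w) \<in> F"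
      and t2: "\<And>u w. u \<in> A' \<Longrightarrow> w < l \<Longrightarrow> w \<notin> B' \<Longrightarrow> (u, w) \<notin> F"
      using h(1) unfolding is_top_def by auto
    have sub2: "nbhd2 F y \<subseteq> nbhd2 F x" if "x \<in> B'" "y < l" "y \<notin> B'" for x y
    proof
      fix u assume "u \<in> nbhd2 F y"
      then have uy: "(u, y) \<in> F" unfolding nbhd2_def by auto
      then have "u \<notin> A'" using t2 that by blast
      then show "u \<in> nbhd2 F x" using t1 Fm[OF uy] that unfolding nbhd2_def by blast
    qed
    have pB: "B' = {} \<or> B' = {..<l}"
    proof (rule closed_connected[OF c2 AB(2)])
      fix x y assume xy: "(x, y) \<in> incomp_graph {..<l} (nbhd2 F)" and x: "x \<in> B'"
      show "y \<in> B'"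
      proof (rule ccontr)
        assume "y \<notin> B'"
        moreover have "y < l" using xy unfolding incomp_graph_def by auto
        ultimately have "nbhd2 F y \<subseteq> nbhd2 F x" using sub2 x by blast
        then show False using xy unfolding incomp_graph_def by auto
      qed
    qed
    have sub1: "nbhd1 F x \<subseteq> nbhd1 F y" if "x \<in> A'" "y < k" "y \<notin> A'" for x y
    proof
      fix w assume "w \<in> nbhd1 F x"
      then have xw: "(x, w) \<in> F" unfolding nbhd1_def by auto
      then have "w \<in> B'" using t2 that Fm[OF xw] by blast
      then show "w \<in> nbhd1 F y" using t1 that unfolding nbhd1_def by blast
    qed
    have pA: "A' = {} \<or> A' = {..<k}"
    proof (rule closed_connected[OF c1 AB(1)])
      fix x y assume xy: "(x, y) \<in> incomp_graph {..<k} (nbhd1 F)" and x: "x \<in> A'"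
      show "y \<in> A'"
      proof (rule ccontr)
        assume "y \<notin> A'"
        moreover have "y < k" using xy unfolding incomp_graph_def by auto
        ultimately have "nbhd1 F x \<subseteq> nbhd1 F y" using sub1 x by blast
        then show False using xy unfolding incomp_graph_def by auto
      qed
    qed
    have n01: "(0::nat) \<in> {..<l}" "(1::nat) \<in> {..<l}" using kl by auto
    show ?thesis
    proof (cases "A' = {}")
      case True
      then have B: "B' = {..<l}" using pB h(2) by blast
      have e: "nbhd2 F a = {..<k}" if "a < l" for a
      proof (intro set_eqI iffI)
        fix u assume "u \<in> nbhd2 F a"
        then have "(u, a) \<in> F" unfolding nbhd2_def by simp
        then show "u \<in> {..<k}" using Fm by blast
      next
        fix u assume "u \<in> {..<k}"
        then have "u < k" "u \<notin> A'" "a \<in> B'" using True B that by auto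
        then have "(u, a) \<in> F" by (rule t1)
        then show "u \<in> nbhd2 F a" unfolding nbhd2_def by simp
      qed
      have "\<forall>a\<in>{..<l}. \<forall>b\<in>{..<l}. nbhd2 F a = nbhd2 F b"
        using e by (metis lessThan_iff)
      then have "\<not> connected_on {..<l} (incomp_graph {..<l} (nbhd2 F))"
        by (rule const_not_connected[OF _ n01]) simp
      then have False using c2 by blast
      then show ?thesis ..
    next
      case False
      then have A: "A' = {..<k}" using pA by blast
      show ?thesis
      proof (cases "B' = {}")
        case True
        have e: "nbhd2 F a = {}" if "a < l" for a
        proof (intro set_eqI iffI)
          fix u assume "u \<in> nbhd2 F a"
          then have ua: "(u, a) \<in> F" unfolding nbhd2_def by simp
          then have "u < k" using Fm by blast
          then have "u \<in> A'" "a < l" "a \<notin> B'" using A True that by auto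
          then have "(u, a) \<notin> F" by (rule t2)
          then show "u \<in> {}" using ua by simp
        qed simp
        have "\<forall>a\<in>{..<l}. \<forall>b\<in>{..<l}. nbhd2 F a = nbhd2 F b"
        using e by (metis lessThan_iff)
        then have "\<not> connected_on {..<l} (incomp_graph {..<l} (nbhd2 F))"
        by (rule const_not_connected[OF _ n01]) simp
      then have False using c2 by blast
        then show ?thesis ..
      next
        case False then show ?thesis using A pB by blast
      qed
    qed
  qed
  have "\<forall>A' B'. is_top k l F A' B' \<and> A' \<subseteq> {..<k} \<and> B' \<subseteq> {..<l} \<and> (A' \<noteq> {} \<or> B' \<noteq> {}) \<longrightarrow> A' = {..<k} \<and> B' = {..<l}"
    using min by blast
  moreover have "{..<k} \<noteq> {}"
  proof -
    have "0 \<in> {..<k}" using kl by simp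
    then show ?thesis by blast
  qed
  ultimately have "mintop k l F {..<k} {..<l}" unfolding mintop_def using top by blast
  then show ?thesis using Fb unfolding indec_def by auto
qed




lemma indec_proper:
  assumes "indec k l F" "is_top k l F A B" "A \<noteq> {} \<or> B \<noteq> {}"
  shows "A = {..<k} \<and> B = {..<l}"
proof -
  have "A \<subseteq> {..<k}" "B \<subseteq> {..<l}" using assms(2) unfolding is_top_def by auto
  then show ?thesis using assms unfolding indec_def mintop_def by blast
qed

lemma indec_tangle:
  assumes I: "indec k l F" and kl: "k \<ge> 2" "l \<ge> 2"
  shows "is_tangle k l F"
proof -
  have Fb: "F \<in> bigraphs k l" using I unfolding indec_def by auto
  have Fm: "\<And>u w. (u, w) \<in> F \<Longrightarrow> u < k \<and> w < l" using Fb bigraphs_mem by blast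
  have c2: "connected_on {..<l} (incomp_graph {..<l} (nbhd2 F))"
  proof (rule ccontr)
    assume "\<not> ?thesis"
    from incomp_split[OF this] obtain Q where Q: "Q \<subseteq> {..<l}" "Q \<noteq> {}" "Q \<noteq> {..<l}"
      and QN: "\<forall>p\<in>{..<l} - Q. \<forall>q\<in>Q. nbhd2 F p \<subseteq> nbhd2 F q" by blast
    define A where "A = {..<k} - (\<Union>p\<in>{..<l} - Q. nbhd2 F p)"
    have "is_top k l F A Q" unfolding is_top_def
    proof (intro conjI ballI)
      show "A \<subseteq> {..<k}" unfolding A_def by auto
      show "Q \<subseteq> {..<l}" by (rule Q(1))
    next
      fix u w assume u: "u \<in> {..<k} - A" and w: "w \<in> Q"
      then obtain p where p: "p \<in> {..<l} - Q" "u \<in> nbhd2 F p" unfolding A_def by auto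
      then have "u \<in> nbhd2 F w" using QN w by blast
      then show "(u, w) \<in> F" unfolding nbhd2_def by simp
    next
      fix u w assume u: "u \<in> A" and w: "w \<in> {..<l} - Q"
      then have "u \<notin> nbhd2 F w" unfolding A_def by blast
      then show "(u, w) \<notin> F" unfolding nbhd2_def by simp
    qed
    then have "Q = {..<l}" using indec_proper[OF I] Q(2) by blast
    then show False using Q(3) by simp
  qed
  have c1: "connected_on {..<k} (incomp_graph {..<k} (nbhd1 F))"
  proof (rule ccontr)
    assume "\<not> ?thesis"
    from incomp_split[OF this] obtain Q where Q: "Q \<subseteq> {..<k}" "Q \<noteq> {}" "Q \<noteq> {..<k}"
      and QN: "\<forall>p\<in>{..<k} - Q. \<forall>q\<in>Q. nbhd1 F p \<subseteq> nbhd1 F q" by blast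
    define B where "B = {..<l} \<inter> (\<Union>p\<in>{..<k} - Q. nbhd1 F p)"
    have "is_top k l F ({..<k} - Q) B" unfolding is_top_def
    proof (intro conjI ballI)
      show "{..<k} - Q \<subseteq> {..<k}" by auto
      show "B \<subseteq> {..<l}" unfolding B_def by auto
    next
      fix u w assume u: "u \<in> {..<k} - ({..<k} - Q)" and w: "w \<in> B"
      then obtain p where p: "p \<in> {..<k} - Q" "w \<in> nbhd1 F p" unfolding B_def by auto
      have "u \<in> Q" using u by auto
      then have "w \<in> nbhd1 F u" using QN p by blast
      then show "(u, w) \<in> F" unfolding nbhd1_def by simp
    next
      fix u w assume u: "u \<in> {..<k} - Q" and w: "w \<in> {..<l} - B"
      then have "w \<notin> nbhd1 F u" unfolding B_def by blast
      then show "(u, w) \<notin> F" unfolding nbhd1_def by simp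
    qed
    moreover have "{..<k} - Q \<noteq> {}" using Q(1,3) by blast
    ultimately have "{..<k} - Q = {..<k}" using indec_proper[OF I] by blast
    then show False using Q(1,2) by blast
  qed
  show ?thesis unfolding is_tangle_def using Fb kl c1 c2 by blast
qed

lemma indec_small:
  assumes I: "indec k l F"
  shows "(k = 1 \<and> l = 0) \<or> (k = 0 \<and> l = 1) \<or> (k \<ge> 2 \<and> l \<ge> 2)"
proof (rule ccontr)
  assume H: "\<not> ?thesis"
  have Fb: "F \<in> bigraphs k l" using I unfolding indec_def by auto
  have ne: "{..<k} \<noteq> {} \<or> {..<l} \<noteq> ({}::nat set)" using I unfolding indec_def mintop_def by auto
  show False
  proof (cases "k = 0")
    case True
    then have "l \<ge> 2" using H ne by auto
    have "is_top k l F {} {0}" unfolding is_top_def using True \<open>l \<ge> 2\<close> by auto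
    then have "{0} = {..<l}" using indec_proper[OF I] by blast
    moreover have "(1::nat) \<in> {..<l}" using \<open>l \<ge> 2\<close> by simp
    ultimately show False by auto
  next
    case k0: False
    show False
    proof (cases "l = 0")
      case True
      then have "k \<ge> 2" using H k0 by auto
      have "is_top k l F {0} {}" unfolding is_top_def using True \<open>k \<ge> 2\<close> by auto
      then have "{0} = {..<k}" using indec_proper[OF I] by blast
      moreover have "(1::nat) \<in> {..<k}" using \<open>k \<ge> 2\<close> by simp
      ultimately show False by auto
    next
      case l0: False
      have kl1: "k = 1 \<or> l = 1" using H k0 l0 by auto
      show False
      proof (cases "\<exists>w<l. \<forall>u<k. (u, w) \<in> F")
        case True
        then obtain w where w: "w < l" "\<forall>u<k. (u, w) \<in> F" by blast
        have "is_top k l F {} {w}" unfolding is_top_def using w by auto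
        then have "{} = {..<k}" using indec_proper[OF I] by blast
        then show False using k0 by auto
      next
        case nw: False
        show False
        proof (cases "\<exists>u<k. \<forall>w<l. (u, w) \<notin> F")
          case True
          then obtain u where u: "u < k" "\<forall>w<l. (u, w) \<notin> F" by blast
          have "is_top k l F {u} {}" unfolding is_top_def using u by auto
          then have "{} = {..<l}" using indec_proper[OF I] by blast
          then show False using l0 by auto
        next
          case nu: False
          show False
          proof (cases "k = 1")
            case True
            obtain w where w: "w < l" "(0, w) \<in> F" using nu True by auto
            then show False using nw True by auto
          next
            case False
            then have "l = 1" using kl1 by simp
            obtain u where u: "u < k" "(u, 0) \<notin> F" using nw \<open>l = 1\<close> by auto
            then show False using nu \<open>l = 1\<close> by auto
          qed
        qed
      qed
    qed
  qed
qed

lemma indec_10: "indec 1 0 F \<longleftrightarrow> F = {}"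
proof
  assume "indec 1 0 F" then show "F = {}" by (simp add: indec_def bigraphs_def)
next
  assume F: "F = {}"
  have e1: "{..<1::nat} = {0}" by auto
  have e0: "{..<0::nat} = {}" by simp
  have t: "is_top 1 0 F {..<1} {..<0}" unfolding is_top_def F by simp
  have m: "A' = {..<1} \<and> B' = {..<0}" if "is_top 1 0 F A' B'" "A' \<noteq> {} \<or> B' \<noteq> {}" for A' B'
  proof -
    have "A' \<subseteq> {..<1}" "B' \<subseteq> {..<0}" using that(1) unfolding is_top_def by blast+
    then have "A' \<subseteq> {0}" "B' = {}" unfolding e1 e0 by auto
    then show ?thesis using that(2) unfolding e1 e0 by blast
  qed
  have ne: "{..<1::nat} \<noteq> {} \<or> {..<0::nat} \<noteq> {}" unfolding e1 e0 by simp
  have "mintop 1 0 F {..<1} {..<0}" unfolding mintop_def using t m ne by blast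
  moreover have "F \<in> bigraphs 1 0" unfolding F bigraphs_def by simp
  ultimately show "indec 1 0 F" unfolding indec_def by blast
qed

lemma indec_01: "indec 0 1 F \<longleftrightarrow> F = {}"
proof
  assume "indec 0 1 F" then show "F = {}" by (simp add: indec_def bigraphs_def)
next
  assume F: "F = {}"
  have e1: "{..<1::nat} = {0}" by auto
  have e0: "{..<0::nat} = {}" by simp
  have t: "is_top 0 1 F {..<0} {..<1}" unfolding is_top_def F by simp
  have m: "A' = {..<0} \<and> B' = {..<1}" if "is_top 0 1 F A' B'" "A' \<noteq> {} \<or> B' \<noteq> {}" for A' B'
  proof -
    have "A' \<subseteq> {..<0}" "B' \<subseteq> {..<1}" using that(1) unfolding is_top_def by blast+
    then have "B' \<subseteq> {0}" "A' = {}" unfolding e1 e0 by auto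
    then show ?thesis using that(2) unfolding e1 e0 by blast
  qed
  have ne: "{..<0::nat} \<noteq> {} \<or> {..<1::nat} \<noteq> {}" unfolding e1 e0 by simp
  have "mintop 0 1 F {..<0} {..<1}" unfolding mintop_def using t m ne by blast
  moreover have "F \<in> bigraphs 0 1" unfolding F bigraphs_def by simp
  ultimately show "indec 0 1 F" unfolding indec_def by blast
qed

lemma card_quot_single:
  assumes "equiv A R" "x \<in> A"
  shows "card ({x} // R) = 1"
  unfolding quotient_def by simp

lemma cI_val:
  "cI k l = tcount k l + (if k = 1 \<and> l = 0 then 1 else 0) + (if k = 0 \<and> l = 1 then 1 else 0)"
proof -
  consider (a) "k \<ge> 2 \<and> l \<ge> 2" | (b) "k = 1 \<and> l = 0" | (c) "k = 0 \<and> l = 1"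
    | (d) "\<not> (k \<ge> 2 \<and> l \<ge> 2)" "\<not> (k = 1 \<and> l = 0)" "\<not> (k = 0 \<and> l = 1)" by blast
  then show ?thesis
  proof cases
    case a
    have "{F. indec k l F} = {E. is_tangle k l E}" using a tangle_indec indec_tangle by blast
    then show ?thesis using a unfolding cI_def tcount_def by simp
  next
    case b
    have "{F. indec k l F} = {{}}" using b indec_10 by auto
    moreover have "{E. is_tangle k l E} = {}" using b unfolding is_tangle_def by auto
    ultimately show ?thesis using b unfolding cI_def tcount_def by (simp only:) (simp add: quotient_def)
  next
    case c
    have "{F. indec k l F} = {{}}" using c indec_01 by auto
    moreover have "{E. is_tangle k l E} = {}" using c unfolding is_tangle_def by auto
    ultimately show ?thesis using c unfolding cI_def tcount_def by (simp only:) (simp add: quotient_def)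
  next
    case d
    have "{F. indec k l F} = {}" using d indec_small by blast
    moreover have "{E. is_tangle k l E} = {}" using d unfolding is_tangle_def by auto
    ultimately show ?thesis using d unfolding cI_def tcount_def by (simp only:) (simp add: quotient_def)
  qed
qed




unbundle fps_syntax

lemma bivar_nth: "bivar_gf c $ i $ j = of_nat (c i j)"
  by (simp add: bivar_gf_def)

lemma bcount00: "bcount 0 0 = 1"
proof -
  have "bigraphs 0 0 = {{}}" unfolding bigraphs_def by auto
  then show ?thesis unfolding bcount_def by (simp add: quotient_def)
qed

lemma cI00: "cI 0 0 = 0"
proof -
  have "{F. indec 0 0 F} = {}" unfolding indec_def mintop_def by auto
  then show ?thesis unfolding cI_def by (simp only:) (simp add: quotient_def)
qed

lemma C_eq: "bivar_gf cI = bivar_gf tcount + X_var + Y_var"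
proof (rule fps_ext)
  fix i
  show "bivar_gf cI $ i = (bivar_gf tcount + X_var + Y_var) $ i"
  proof (rule fps_ext)
    fix j
    show "bivar_gf cI $ i $ j = (bivar_gf tcount + X_var + Y_var) $ i $ j"
      by (simp add: bivar_nth cI_val fps_X_nth)
  qed
qed

lemma B_mult: "bivar_gf bcount * (1 - bivar_gf cI) = 1"
proof (rule fps_ext)
  fix i
  show "(bivar_gf bcount * (1 - bivar_gf cI)) $ i = (1 :: rat fps fps) $ i"
  proof (rule fps_ext)
    fix j
    have prod: "(bivar_gf bcount * bivar_gf cI) $ i $ j = (\<Sum>a=0..i. \<Sum>b=0..j. of_nat (bcount a b * cI (i - a) (j - b)))"
      by (simp add: fps_mult_nth fps_sum_nth bivar_nth)
    have "(bivar_gf bcount * (1 - bivar_gf cI)) $ i $ j = of_nat (bcount i j) - (bivar_gf bcount * bivar_gf cI) $ i $ j"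
      by (simp add: algebra_simps bivar_nth)
    also have "\<dots> = (1 :: rat fps fps) $ i $ j"
    proof (cases "i = 0 \<and> j = 0")
      case True
      then show ?thesis unfolding prod by (simp add: bcount00 cI00)
    next
      case False
      then have "(i, j) \<noteq> (0, 0)" by simp
      from bcount_rec[OF this] have "of_nat (bcount i j) = (\<Sum>a=0..i. \<Sum>b=0..j. of_nat (bcount a b * cI (i - a) (j - b)) :: rat)"
        by (simp add: atLeast0AtMost)
      moreover have "(1 :: rat fps fps) $ i $ j = 0" using False by auto
      ultimately show ?thesis unfolding prod by simp
    qed
    finally show "(bivar_gf bcount * (1 - bivar_gf cI)) $ i $ j = (1 :: rat fps fps) $ i $ j" .
  qed
qed

lemma B_inv: "inverse (bivar_gf bcount) = 1 - bivar_gf cI"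
proof -
  let ?f = "bivar_gf bcount" and ?g = "1 - bivar_gf cI"
  have fg: "?f * ?g = 1" by (rule B_mult)
  have "?f $ 0 * ?g $ 0 = 1" using fps_mult_nth_0[of ?f ?g] fg by simp
  then have inv0: "inverse (?f $ 0) = ?g $ 0" by (rule fps_inverse_unique)
  have "?g $ 0 * ?f $ 0 = 1" using \<open>?f $ 0 * ?g $ 0 = 1\<close> by (simp add: mult.commute)
  then have "fps_right_inverse ?f (?g $ 0) = ?g" using fg by (intro fps_lr_inverse_unique_ring1(2))
  moreover have "inverse ?f = fps_right_inverse ?f (inverse (?f $ 0))" by (rule fps_inverse_def)
  ultimately show ?thesis unfolding inv0 by simp
qed

theorem theorem4p2:
  shows "bivar_gf tcount = 1 - X_var - Y_var - inverse (bivar_gf bcount)"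
  unfolding B_inv C_eq by (simp add: algebra_simps)


end
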